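(* Let $\alpha>\beta\ge2$ be two real numbers with $\alpha/\beta\in\mathbb{Q} \setminus \mathbb{N}$ and $[\alpha,\beta]\ge\min\{\alpha^2,10^\beta\}$. Then, as $T\to\infty$, \[ \frac{\mathbb{P}_T\big(\mathcal{N}_\alpha\cap \mathcal{N}_\beta\big)}{\mathbb{P}_T\big(\mathcal{N}_\alpha\big) \mathbb{P}_T\big(\mathcal{N}_\beta\big)} \ \lesssim \ 1 +O\bigg(\frac{\log(2\beta)}{\alpha/\beta}+\frac{1}{\beta}\bigg), \] i.e. there is an absolute constant $c>0$ such that the $\limsup_{T\to\infty}$ of the left-hand side is at most $1+c\big(\frac{\log(2\beta)}{\alpha/\beta}+\frac1\beta\big)$.
   Context: Height: for rational $\rho=a/q>0$ with $\gcd(a,q)=1$, $H(\rho)=\max\{a,q\}$ (and $H(\rho)=\infty$ for irrational $\rho$). Bracket: $[\alpha,\beta]=H(\alpha/\beta)/\max\{\alpha,\beta\}$. $P^-(n)$ denotes the smallest prime factor of $n\in\mathbb{N}$, with $P^-(1)=\infty$. For $\alpha\ge1$, $\mathcal{N}_\alpha=\bigcup_{n\in\mathbb{N},\ P^-(n)>\alpha}(n\alpha-\tfrac12,n\alpha+\tfrac12)$. $\mathbb{P}_T(\mathcal{S})=\mathrm{meas}(\mathcal{S}\cap[0,T])/T$ with Lebesgue measure. $f\lesssim g$ means $f\le(1+o(1))g$ as $T\to\infty$. *)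

theory Defs
  imports "HOL-Analysis.Analysis" "HOL-Computational_Algebra.Primes"
begin

definition height :: "real \<Rightarrow> ereal" where
  "height \<rho> = (if \<rho> \<in> \<rat> then
      (let (a, q) = quotient_of (THE r::rat. of_rat r = \<rho>) in ereal (real_of_int (max a q)))
    else \<infinity>)"

definition bracket :: "real \<Rightarrow> real \<Rightarrow> ereal" where
  "bracket \<alpha> \<beta> = height (\<alpha> / \<beta>) / ereal (max \<alpha> \<beta>)"

definition lpf :: "nat \<Rightarrow> ereal" where
  "lpf n = (if n = 1 then \<infinity> else ereal (real (Min (prime_factors n))))"

definition Nset :: "real \<Rightarrow> real set" where
  "Nset \<alpha> = (\<Union>n\<in>{n::nat. n \<ge> 1 \<and> lpf n > ereal \<alpha>}.
                 {real n * \<alpha> - 1/2 <..< real n * \<alpha> + 1/2})"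

definition PT :: "real \<Rightarrow> real set \<Rightarrow> real" where
  "PT T S = measure lebesgue (S \<inter> {0..T}) / T"

end

theory Submission
  imports Defs
begin



lemma crt_inj:
  fixes p P :: nat
  assumes cop: "coprime p P" and pp: "p > 0" "P > 0"
  shows "inj_on (\<lambda>t. (t mod p, t mod P)) {..<p*P}"
proof (rule inj_onI)
  fix x y assume x: "x \<in> {..<p*P}" and y: "y \<in> {..<p*P}"
    and e: "(x mod p, x mod P) = (y mod p, y mod P)"
  show "x = y"
  proof (rule ccontr)
    assume ne: "x \<noteq> y"
    { fix u v :: nat assume uv: "u < v" "v < p*P" "u mod p = v mod p" "u mod P = v mod P"
      have "p dvd v - u" using uv by (metis less_imp_le mod_eq_dvd_iff_nat)
      moreover have "P dvd v - u" using uv by (metis less_imp_le mod_eq_dvd_iff_nat)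
      ultimately have "p*P dvd v - u" using cop by (simp add: divides_mult)
      moreover have "0 < v - u" "v - u < p * P" using uv by auto
      ultimately have False using nat_dvd_not_less by blast }
    note * = this
    show False
    proof (cases "x < y")
      case True thus False using *[of x y] x y e by auto
    next
      case False hence "y < x" using ne by auto
      thus False using *[of y x] x y e by auto
    qed
  qed
qed

lemma crt_image:
  fixes p P :: nat
  assumes cop: "coprime p P" and pp: "p > 0" "P > 0"
  shows "(\<lambda>t. (t mod p, t mod P)) ` {..<p*P} = {..<p} \<times> {..<P}"
proof -
  have sub: "(\<lambda>t. (t mod p, t mod P)) ` {..<p*P} \<subseteq> {..<p} \<times> {..<P}"
    using pp by auto
  have "card ((\<lambda>t. (t mod p, t mod P)) ` {..<p*P}) = p * P"
    using card_image[OF crt_inj[OF assms]] by simp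
  also have "\<dots> = card ({..<p} \<times> {..<P})" by (simp add: card_cartesian_product)
  finally show ?thesis using sub by (intro card_subset_eq) auto
qed

lemma crt_count:
  fixes Pi :: "nat set" and C :: "nat \<Rightarrow> nat \<Rightarrow> bool"
  assumes "finite Pi" "\<forall>p\<in>Pi. prime p"
  shows "card {t. t < \<Prod>Pi \<and> (\<forall>p\<in>Pi. C p (t mod p))} = (\<Prod>p\<in>Pi. card {r. r < p \<and> C p r})"
  using assms
proof (induction Pi rule: finite_induct)
  case empty
  then show ?case by simp
next
  case (insert p F)
  define P where "P = \<Prod>F"
  have pr: "prime p" using insert by auto
  have Fpr: "\<forall>q\<in>F. prime q" using insert by auto
  have Ppos: "P > 0" unfolding P_def using Fpr by (intro prod_pos) (auto simp: prime_gt_0_nat)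
  have ppos: "p > 0" using pr prime_gt_0_nat by auto
  have cop: "coprime p P"
    unfolding P_def
  proof (rule prime_imp_coprime[OF pr])
    show "\<not> p dvd \<Prod>F"
    proof
      assume "p dvd \<Prod>F"
      then obtain q where "q \<in> F" "p dvd q" using prime_dvd_prod_iff[OF insert(1) pr] by auto
      hence "p = q" using Fpr pr by (simp add: primes_dvd_imp_eq)
      thus False using \<open>q \<in> F\<close> insert(2) by auto
    qed
  qed
  have prodeq: "\<Prod>(insert p F) = p * P" using insert P_def by simp
  define f where "f = (\<lambda>t::nat. (t mod p, t mod P))"
  define S where "S = {t. t < p * P \<and> (\<forall>q\<in>insert p F. C q (t mod q))}"
  define A where "A = {r. r < p \<and> C p r}"
  define B where "B = {t. t < P \<and> (\<forall>q\<in>F. C q (t mod q))}"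
  have modq: "t mod P mod q = t mod q" if "q \<in> F" for t q
  proof -
    have "q dvd P" unfolding P_def using dvd_prodI[OF insert(1) that, of id] by simp
    thus ?thesis by (simp add: mod_mod_cancel)
  qed
  have "f ` S = A \<times> B"
  proof
    show "f ` S \<subseteq> A \<times> B"
      unfolding S_def A_def B_def f_def using ppos Ppos modq by auto
  next
    show "A \<times> B \<subseteq> f ` S"
    proof
      fix x assume x: "x \<in> A \<times> B"
      then have "x \<in> {..<p} \<times> {..<P}" unfolding A_def B_def by auto
      then have "x \<in> f ` {..<p*P}" using crt_image[OF cop ppos Ppos] unfolding f_def by simp
      then obtain t where t: "t < p * P" "f t = x" by auto
      obtain r s where xrs: "x = (r, s)" by (cases x)
      have tr: "t mod p = r" and ts: "t mod P = s" using t xrs unfolding f_def by auto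
      have "C p r" "\<forall>q\<in>F. C q (s mod q)" using x xrs unfolding A_def B_def by auto
      hence "t \<in> S" using t(1) tr ts modq unfolding S_def by auto
      thus "x \<in> f ` S" using t by auto
    qed
  qed
  moreover have "inj_on f S"
    using crt_inj[OF cop ppos Ppos] unfolding f_def S_def by (rule inj_on_subset) auto
  ultimately have "card S = card A * card B"
    by (metis card_cartesian_product card_image)
  moreover have "card B = (\<Prod>q\<in>F. card {r. r < q \<and> C q r})"
    using insert unfolding B_def P_def by auto
  ultimately have "card S = card A * (\<Prod>q\<in>F. card {r. r < q \<and> C q r})" by simp
  thus ?case using insert(1,2) unfolding S_def A_def P_def by simp
qed



lemma periodic_iter:
  fixes g :: "nat \<Rightarrow> bool"
  assumes per: "\<And>n. g (n + L) = g n"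
  shows "g (n + k * L) = g n"
proof (induction k)
  case 0 then show ?case by simp
next
  case (Suc k)
  have "g (n + Suc k * L) = g ((n + k * L) + L)" by (simp add: algebra_simps)
  also have "\<dots> = g (n + k * L)" by (rule per)
  finally show ?case using Suc by simp
qed

lemma periodic_count_mult:
  fixes g :: "nat \<Rightarrow> bool"
  assumes per: "\<And>n. g (n + L) = g n"
  shows "card {n. n < k * L \<and> g n} = k * card {n. n < L \<and> g n}"
proof (induction k)
  case 0 then show ?case by simp
next
  case (Suc k)
  have split: "{n. n < Suc k * L \<and> g n} = {n. n < k * L \<and> g n} \<union> (\<lambda>n. n + k * L) ` {n. n < L \<and> g n}"
  proof (intro set_eqI iffI)
    fix x assume "x \<in> {n. n < Suc k * L \<and> g n}"
    hence x: "x < k * L + L" "g x" by auto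
    show "x \<in> {n. n < k * L \<and> g n} \<union> (\<lambda>n. n + k * L) ` {n. n < L \<and> g n}"
    proof (cases "x < k * L")
      case True thus ?thesis using x by auto
    next
      case False
      then obtain y where y: "x = y + k * L" by (metis add.commute le_iff_add not_less)
      have "g y" using x(2) y periodic_iter[where g=g and L=L, OF per, of y k] by simp
      moreover have "y < L" using x(1) y by simp
      ultimately show ?thesis using y by auto
    qed
  next
    fix x assume "x \<in> {n. n < k * L \<and> g n} \<union> (\<lambda>n. n + k * L) ` {n. n < L \<and> g n}"
    thus "x \<in> {n. n < Suc k * L \<and> g n}"
    proof
      assume "x \<in> {n. n < k * L \<and> g n}" thus ?thesis by auto
    next
      assume "x \<in> (\<lambda>n. n + k * L) ` {n. n < L \<and> g n}"
      then obtain y where "y < L" "g y" "x = y + k * L" by auto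
      thus ?thesis using periodic_iter[where g=g and L=L, OF per, of y k] by simp
    qed
  qed
  have disj: "{n. n < k * L \<and> g n} \<inter> (\<lambda>n. n + k * L) ` {n. n < L \<and> g n} = {}" by auto
  have "card {n. n < Suc k * L \<and> g n} = card {n. n < k * L \<and> g n} + card ((\<lambda>n. n + k * L) ` {n. n < L \<and> g n})"
    unfolding split by (rule card_Un_disjoint) (use disj in auto)
  also have "card ((\<lambda>n. n + k * L) ` {n. n < L \<and> g n}) = card {n. n < L \<and> g n}"
    by (rule card_image) (auto simp: inj_on_def)
  finally show ?case using Suc by simp
qed

lemma periodic_count_le:
  fixes g :: "nat \<Rightarrow> bool"
  assumes per: "\<And>n. g (n + L) = g n" and L: "L > 0"
  shows "card {n. 1 \<le> n \<and> n \<le> N \<and> g n} \<le> (N div L + 1) * card {n. n < L \<and> g n}"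
proof -
  have "N < (N div L + 1) * L" using L
    by (metis add.commute div_mult_mod_eq less_add_same_cancel2 mod_less_divisor add_less_cancel_left distrib_right mult_1)
  hence "{n. 1 \<le> n \<and> n \<le> N \<and> g n} \<subseteq> {n. n < (N div L + 1) * L \<and> g n}" by auto
  hence "card {n. 1 \<le> n \<and> n \<le> N \<and> g n} \<le> card {n. n < (N div L + 1) * L \<and> g n}"
    by (intro card_mono) auto
  also have "\<dots> = (N div L + 1) * card {n. n < L \<and> g n}" by (rule periodic_count_mult[where g=g and L=L, OF per])
  finally show ?thesis .
qed

lemma periodic_count_ge:
  fixes g :: "nat \<Rightarrow> bool"
  assumes per: "\<And>n. g (n + L) = g n" and L: "L > 0" and g0: "\<not> g 0"
  shows "(N div L) * card {n. n < L \<and> g n} \<le> card {n. 1 \<le> n \<and> n \<le> N \<and> g n}"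
proof -
  have "(N div L) * L \<le> N" by (metis div_mult_mod_eq le_add1)
  hence "{n. n < (N div L) * L \<and> g n} \<subseteq> {n. 1 \<le> n \<and> n \<le> N \<and> g n}"
  proof -
    assume h: "(N div L) * L \<le> N"
    show ?thesis
    proof
      fix x assume "x \<in> {n. n < (N div L) * L \<and> g n}"
      hence x: "x < (N div L) * L" "g x" by auto
      have x0: "x \<noteq> 0"
      proof
        assume "x = 0" thus False using x(2) g0 by simp
      qed
      have "1 \<le> x" using x0 by simp
      moreover have "x \<le> N" using x(1) h by linarith
      ultimately show "x \<in> {n. 1 \<le> n \<and> n \<le> N \<and> g n}" using x(2) by blast
    qed
  qed
  hence "card {n. n < (N div L) * L \<and> g n} \<le> card {n. 1 \<le> n \<and> n \<le> N \<and> g n}"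
    by (intro card_mono) auto
  thus ?thesis using periodic_count_mult[where g=g and L=L, OF per] by simp
qed

definition tri :: "real \<Rightarrow> int \<Rightarrow> real" where
  "tri Y j = max 0 (1 - \<bar>real_of_int j\<bar> / Y)"

lemma sum_abs_sym: "(\<Sum>j\<in>{-int k..int k}. \<bar>real_of_int j\<bar>) = real k * (real k + 1)"
proof (induction k)
  case 0 then show ?case by simp
next
  case (Suc k)
  have e: "{-int (Suc k)..int (Suc k)} = insert (-int (Suc k)) (insert (int (Suc k)) {-int k..int k})"
    by auto
  show ?case unfolding e using Suc by (simp add: algebra_simps)
qed

lemma card_sym: "card {-int k..int k} = 2 * k + 1"
  by simp

lemma tri_sum:
  fixes Y :: real and Z :: "int set"
  assumes Y: "Y > 0" and Z: "finite Z" "{j. \<bar>real_of_int j\<bar> < Y} \<subseteq> Z"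
  shows "Y \<le> (\<Sum>j\<in>Z. tri Y j) \<and> (\<Sum>j\<in>Z. tri Y j) \<le> Y + 1"
proof -
  define k where "k = nat (\<lceil>Y\<rceil> - 1)"
  have c: "real_of_int \<lceil>Y\<rceil> - 1 < Y" "Y \<le> real_of_int \<lceil>Y\<rceil>" using ceiling_correct[of Y] by auto
  have cpos: "\<lceil>Y\<rceil> \<ge> 1" using Y by linarith
  have kk: "real k = real_of_int \<lceil>Y\<rceil> - 1" unfolding k_def using cpos by simp
  have k1: "real k < Y" using kk c by simp
  have k2: "Y \<le> real k + 1" using kk c by simp
  define W where "W = {-int k..int k}"
  have WZ: "W \<subseteq> Z"
  proof
    fix x assume "x \<in> W"
    hence "\<bar>x\<bar> \<le> int k" unfolding W_def by auto
    hence "\<bar>real_of_int x\<bar> \<le> real k" by linarith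
    hence "\<bar>real_of_int x\<bar> < Y" using k1 by linarith
    thus "x \<in> Z" using Z(2) by auto
  qed
  have "(\<Sum>j\<in>Z. tri Y j) = (\<Sum>j\<in>W. tri Y j)"
  proof (rule sum.mono_neutral_right[OF Z(1) WZ])
    show "\<forall>j\<in>Z - W. tri Y j = 0"
    proof
      fix j assume "j \<in> Z - W"
      hence "\<bar>j\<bar> \<ge> int k + 1" unfolding W_def by auto
      hence "\<bar>real_of_int j\<bar> \<ge> real k + 1" by linarith
      hence "\<bar>real_of_int j\<bar> \<ge> Y" using k2 by linarith
      thus "tri Y j = 0" unfolding tri_def using Y by (simp add: divide_simps)
    qed
  qed
  also have "\<dots> = (\<Sum>j\<in>W. 1 - \<bar>real_of_int j\<bar> / Y)"
  proof (rule sum.cong[OF refl])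
    fix j assume "j \<in> W"
    hence "\<bar>real_of_int j\<bar> \<le> real k" unfolding W_def by auto
    hence "\<bar>real_of_int j\<bar> / Y \<le> 1" using k1 Y by (simp add: divide_simps)
    thus "tri Y j = 1 - \<bar>real_of_int j\<bar> / Y" unfolding tri_def by simp
  qed
  also have "\<dots> = (2 * real k + 1) - real k * (real k + 1) / Y"
    unfolding W_def sum_subtractf sum_divide_distrib[symmetric] sum_abs_sym by simp
  finally have S: "(\<Sum>j\<in>Z. tri Y j) = (2 * real k + 1) - real k * (real k + 1) / Y" .
  have A: "(Y - real k) * (Y - real k - 1) \<le> 0" using k1 k2 by (intro mult_nonneg_nonpos) auto
  have B: "0 \<le> (Y - real k)^2 + real k" by simp
  have "Y \<le> (2 * real k + 1) - real k * (real k + 1) / Y"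
    using A Y by (simp add: field_simps)
  moreover have "(2 * real k + 1) - real k * (real k + 1) / Y \<le> Y + 1"
  proof -
    have B2: "Y * (real k * 2) \<le> real k + (Y * Y + real k * real k)"
      using B unfolding power2_eq_square by (simp add: algebra_simps)
    show ?thesis using B2 Y by (simp add: field_simps)
  qed
  ultimately show ?thesis using S by simp
qed



lemma prime_not_dvd_prod:
  fixes p :: nat
  assumes "finite F" "\<forall>q\<in>F. prime q" "prime p" "p \<notin> F"
  shows "coprime p (\<Prod>F)"
proof (rule prime_imp_coprime[OF assms(3)])
  show "\<not> p dvd \<Prod>F"
  proof
    assume "p dvd \<Prod>F"
    then obtain q where "q \<in> F" "p dvd q" using prime_dvd_prod_iff[OF assms(1,3)] by auto
    hence "p = q" using assms by (simp add: primes_dvd_imp_eq)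
    thus False using \<open>q \<in> F\<close> assms(4) by auto
  qed
qed

lemma prime_set_dvd:
  fixes S :: "nat set" and h :: int
  assumes "finite S" "\<forall>p\<in>S. prime p"
  shows "(\<forall>p\<in>S. int p dvd h) \<longleftrightarrow> int (\<Prod>S) dvd h"
  using assms
proof (induction S rule: finite_induct)
  case empty then show ?case by simp
next
  case (insert p F)
  obtain Q where Q: "Q = \<Prod>F" by blast
  have cop: "coprime p Q" using prime_not_dvd_prod[of F p] insert Q by auto
  hence copi: "coprime (int p) (int Q)" by simp
  have "int (\<Prod>(insert p F)) = int p * int Q" using insert Q by simp
  moreover have "int p * int Q dvd h \<longleftrightarrow> int p dvd h \<and> int Q dvd h"
    using copi by (meson divides_mult dvd_mult_left dvd_mult_right dvd_trans)
  moreover have "(\<forall>p\<in>F. int p dvd h) \<longleftrightarrow> int Q dvd h" using insert Q by auto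
  ultimately show ?case by auto
qed

lemma tri_dvd_sum:
  fixes H :: real and Z :: "int set" and d :: nat
  assumes H: "H > 0" and Z: "finite Z" "{j. \<bar>real_of_int j\<bar> < H} \<subseteq> Z" and d: "d > 0"
  shows "H / d \<le> (\<Sum>h\<in>Z. tri H h * (if int d dvd h then 1 else 0))
       \<and> (\<Sum>h\<in>Z. tri H h * (if int d dvd h then 1 else 0)) \<le> H / d + 1"
proof -
  define Zd where "Zd = {j. int d * j \<in> Z}"
  have inj: "inj (\<lambda>j::int. int d * j)" using d by (auto simp: inj_def)
  have finZd: "finite Zd" unfolding Zd_def
    using finite_vimageI[OF Z(1) inj] by (simp add: vimage_def)
  have img: "(\<lambda>j. int d * j) ` Zd = {h \<in> Z. int d dvd h}" unfolding Zd_def by (auto elim!: dvdE)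
  have "(\<Sum>h\<in>Z. tri H h * (if int d dvd h then 1 else 0)) = (\<Sum>h\<in>{h \<in> Z. int d dvd h}. tri H h)"
    using Z(1) by (simp add: sum.inter_filter[symmetric] if_distrib cong: if_cong)
  also have "\<dots> = (\<Sum>j\<in>Zd. tri H (int d * j))"
  proof -
    have "inj_on (\<lambda>j. int d * j) Zd" using inj by (simp add: inj_on_def inj_def)
    thus ?thesis unfolding img[symmetric] by (simp add: sum.reindex comp_def)
  qed
  also have "\<dots> = (\<Sum>j\<in>Zd. tri (H / d) j)"
  proof (rule sum.cong[OF refl])
    fix j
    have "\<bar>real_of_int (int d * j)\<bar> / H = \<bar>real_of_int j\<bar> / (H / d)"
      using d H by (simp add: abs_mult field_simps)
    thus "tri H (int d * j) = tri (H / d) j" unfolding tri_def by (rule arg_cong[where f="\<lambda>x. max 0 (1 - x)"])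
  qed
  finally have eq: "(\<Sum>h\<in>Z. tri H h * (if int d dvd h then 1 else 0)) = (\<Sum>j\<in>Zd. tri (H / d) j)" .
  have sub: "{j. \<bar>real_of_int j\<bar> < H / d} \<subseteq> Zd"
  proof
    fix j assume "j \<in> {j. \<bar>real_of_int j\<bar> < H / d}"
    hence "\<bar>real_of_int j\<bar> * d < H" using d by (simp add: field_simps)
    hence "\<bar>real_of_int (int d * j)\<bar> < H" by (simp add: abs_mult mult.commute)
    thus "j \<in> Zd" using Z(2) unfolding Zd_def by auto
  qed
  show ?thesis unfolding eq using tri_sum[OF _ finZd sub] H d by simp
qed

lemma sieve_bound:
  fixes Pi :: "nat set" and u v :: "nat \<Rightarrow> real" and H :: real and Z :: "int set"
  assumes fin: "finite Pi" and pr: "\<forall>p\<in>Pi. prime p"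
    and H: "H > 0" and Z: "finite Z" "{j. \<bar>real_of_int j\<bar> < H} \<subseteq> Z"
  shows "(\<Sum>h\<in>Z. tri H h * (\<Prod>p\<in>Pi. u p + v p * (if int p dvd h then 1 else 0)))
     \<le> H * (\<Prod>p\<in>Pi. u p + v p / p) + (\<Prod>p\<in>Pi. \<bar>u p\<bar> + \<bar>v p\<bar>)"
proof -
  define c where "c S = (\<Prod>p\<in>S. v p) * (\<Prod>p\<in>Pi - S. u p)" for S
  define D where "D S = (\<Sum>h\<in>Z. tri H h * (if int (\<Prod>S) dvd h then 1 else 0))" for S
  have exp: "(\<Prod>p\<in>Pi. u p + v p * (if int p dvd h then 1 else 0))
        = (\<Sum>S\<in>Pow Pi. c S * (if int (\<Prod>S) dvd h then 1 else 0))" for h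
  proof -
    have "(\<Prod>p\<in>Pi. u p + v p * (if int p dvd h then 1 else 0))
        = (\<Prod>p\<in>Pi. v p * (if int p dvd h then 1 else 0) + u p)" by (simp add: add.commute)
    also have "\<dots> = (\<Sum>S\<in>Pow Pi. (\<Prod>p\<in>S. v p * (if int p dvd h then 1 else 0)) * (\<Prod>p\<in>Pi - S. u p))"
      by (rule prod_add[OF fin])
    also have "\<dots> = (\<Sum>S\<in>Pow Pi. c S * (if int (\<Prod>S) dvd h then 1 else 0))"
    proof (rule sum.cong[OF refl])
      fix S assume S: "S \<in> Pow Pi"
      have finS: "finite S" using S fin finite_subset by auto
      have prS: "\<forall>p\<in>S. prime p" using S pr by auto
      have "(\<Prod>p\<in>S. v p * (if int p dvd h then 1 else 0)) = (\<Prod>p\<in>S. v p) * (\<Prod>p\<in>S. (if int p dvd h then 1 else 0 :: real))"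
        by (simp add: prod.distrib)
      also have "(\<Prod>p\<in>S. (if int p dvd h then 1 else 0 :: real)) = (if int (\<Prod>S) dvd h then 1 else 0)"
      proof (cases "\<forall>p\<in>S. int p dvd h")
        case True
        have "(\<Prod>p\<in>S. (if int p dvd h then 1 else 0 :: real)) = 1" using True by (intro prod.neutral) simp
        moreover have "int (\<Prod>S) dvd h" using True prime_set_dvd[OF finS prS, of h] by blast
        ultimately show ?thesis by simp
      next
        case False
        then obtain p where "p \<in> S" "\<not> int p dvd h" by auto
        hence "(\<Prod>p\<in>S. (if int p dvd h then 1 else 0 :: real)) = 0"
          using finS by (intro prod_zero) auto
        moreover have "\<not> int (\<Prod>S) dvd h" using False prime_set_dvd[OF finS prS, of h] by blast
        ultimately show ?thesis by simp
      qed
      finally show "(\<Prod>p\<in>S. v p * (if int p dvd h then 1 else 0)) * (\<Prod>p\<in>Pi - S. u p) = c S * (if int (\<Prod>S) dvd h then 1 else 0)"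
        unfolding c_def by simp
    qed
    finally show ?thesis .
  qed
  have "(\<Sum>h\<in>Z. tri H h * (\<Prod>p\<in>Pi. u p + v p * (if int p dvd h then 1 else 0)))
      = (\<Sum>h\<in>Z. \<Sum>S\<in>Pow Pi. c S * (tri H h * (if int (\<Prod>S) dvd h then 1 else 0)))"
    unfolding exp by (simp add: sum_distrib_left mult.assoc mult.left_commute)
  also have "\<dots> = (\<Sum>S\<in>Pow Pi. c S * D S)"
    unfolding D_def by (subst sum.swap) (simp add: sum_distrib_left)
  also have "\<dots> \<le> (\<Sum>S\<in>Pow Pi. c S * (H / (\<Prod>S)) + \<bar>c S\<bar>)"
  proof (rule sum_mono)
    fix S assume S: "S \<in> Pow Pi"
    have finS: "finite S" using S fin finite_subset by auto
    have dpos: "\<Prod>S > 0" using S pr by (intro prod_pos) (auto simp: prime_gt_0_nat)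
    have b: "H / (\<Prod>S) \<le> D S \<and> D S \<le> H / (\<Prod>S) + 1"
      unfolding D_def using tri_dvd_sum[OF H Z dpos] by simp
    show "c S * D S \<le> c S * (H / (\<Prod>S)) + \<bar>c S\<bar>"
    proof (cases "c S \<ge> 0")
      case True
      have "c S * D S \<le> c S * (H / (\<Prod>S) + 1)" using b True by (intro mult_left_mono) auto
      thus ?thesis using True by (simp add: algebra_simps)
    next
      case False
      have "c S * D S \<le> c S * (H / (\<Prod>S))" using b False by (intro mult_left_mono_neg) auto
      thus ?thesis by simp
    qed
  qed
  also have "\<dots> = H * (\<Sum>S\<in>Pow Pi. (\<Prod>p\<in>S. v p / p) * (\<Prod>p\<in>Pi - S. u p)) + (\<Sum>S\<in>Pow Pi. (\<Prod>p\<in>S. \<bar>v p\<bar>) * (\<Prod>p\<in>Pi - S. \<bar>u p\<bar>))"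
  proof -
    have "c S * (H / (\<Prod>S)) = H * ((\<Prod>p\<in>S. v p / p) * (\<Prod>p\<in>Pi - S. u p))" for S
      unfolding c_def by (simp add: prod_dividef field_simps)
    moreover have "\<bar>c S\<bar> = (\<Prod>p\<in>S. \<bar>v p\<bar>) * (\<Prod>p\<in>Pi - S. \<bar>u p\<bar>)" for S
      unfolding c_def by (simp add: abs_mult abs_prod)
    ultimately show ?thesis by (simp add: sum.distrib sum_distrib_left)
  qed
  also have "\<dots> = H * (\<Prod>p\<in>Pi. v p / p + u p) + (\<Prod>p\<in>Pi. \<bar>v p\<bar> + \<bar>u p\<bar>)"
    by (simp add: prod_add[OF fin])
  finally show ?thesis by (simp add: add.commute)
qed



lemma root_exists:
  fixes p :: nat and b c :: int
  assumes pr: "prime p" and nb: "\<not> int p dvd b"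
  shows "\<exists>r<p. int p dvd c + b * int r"
proof -
  have pri: "prime (int p)" using pr by simp
  have "coprime (int p) b" using pri nb by (simp add: prime_imp_coprime)
  hence "coprime b (int p)" by (simp add: coprime_commute)
  hence g: "gcd b (int p) = 1" by (simp add: coprime_iff_gcd_eq_1)
  obtain x y where xy: "x * b + y * int p = 1" using bezout_int[of b "int p"] g by auto
  have pp: "int p > 0" using pr prime_gt_0_nat by simp
  define r0 where "r0 = (- c * x) mod int p"
  have r0: "0 \<le> r0" "r0 < int p" unfolding r0_def using pp by auto
  have "int p dvd (- c * x) - r0" unfolding r0_def by (simp add: mod_eq_dvd_iff[symmetric] mod_diff_eq[symmetric])
  hence d1: "int p dvd b * ((- c * x) - r0)" by simp
  have "c + b * r0 = c * (1 - x * b) - b * ((- c * x) - r0)" by (simp add: algebra_simps)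
  also have "\<dots> = c * (y * int p) - b * ((- c * x) - r0)"
  proof -
    have e: "1 - x * b = y * int p" using xy by linarith
    show ?thesis by (simp only: e)
  qed
  finally have "int p dvd c + b * r0" using d1 by simp
  moreover have "int (nat r0) = r0" using r0 by simp
  moreover have "nat r0 < p" using r0 by linarith
  ultimately show ?thesis by (intro exI[of _ "nat r0"]) simp
qed

lemma card_le_minus1:
  fixes p :: nat and G :: "nat \<Rightarrow> bool"
  assumes "r1 < p" "\<not> G r1"
  shows "card {r. r < p \<and> G r} \<le> p - 1"
proof -
  have "{r. r < p \<and> G r} \<subseteq> {..<p} - {r1}" using assms by auto
  hence "card {r. r < p \<and> G r} \<le> card ({..<p} - {r1})" by (intro card_mono) auto
  also have "\<dots> = p - 1" using assms by simp
  finally show ?thesis .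
qed

lemma card_le_minus2:
  fixes p :: nat and G :: "nat \<Rightarrow> bool"
  assumes "r1 < p" "\<not> G r1" "r2 < p" "\<not> G r2" "r1 \<noteq> r2"
  shows "card {r. r < p \<and> G r} \<le> p - 2"
proof -
  have "{r. r < p \<and> G r} \<subseteq> {..<p} - {r1, r2}" using assms by auto
  hence "card {r. r < p \<and> G r} \<le> card ({..<p} - {r1, r2})" by (intro card_mono) auto
  also have "\<dots> = p - 2" using assms by (simp add: card_Diff_subset)
  finally show ?thesis .
qed

lemma card_le_p:
  fixes p :: nat and G :: "nat \<Rightarrow> bool"
  shows "card {r. r < p \<and> G r} \<le> p"
proof -
  have "card {r. r < p \<and> G r} \<le> card {..<p}" by (intro card_mono) auto
  thus ?thesis by simp
qed

definition uu :: "bool \<Rightarrow> nat \<Rightarrow> nat \<Rightarrow> nat \<Rightarrow> real" where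
  "uu sm p a q = (if sm then (if p dvd a \<or> p dvd q then (real p - 1) / p else (real p - 2) / p)
                 else (if p dvd q then 1 else (real p - 1) / p))"

definition vv :: "bool \<Rightarrow> nat \<Rightarrow> nat \<Rightarrow> nat \<Rightarrow> real" where
  "vv sm p a q = (if sm then (if p dvd a \<or> p dvd q then - (real p - 1) / p else 1 / p)
                 else (if p dvd q then -1 else 0))"

lemma local_count:
  fixes p a q :: nat and nh mh h :: int
  assumes pr: "prime p" and cop: "coprime a q"
    and hdef: "int a * nh - int q * mh = h"
  shows "real (card {r. r < p \<and> \<not> int p dvd (nh + int q * int r)
                 \<and> (sm \<longrightarrow> \<not> int p dvd (mh + int a * int r))})
         \<le> real p * (uu sm p a q + vv sm p a q * (if int p dvd h then 1 else 0))"
proof -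
  define G where "G r = (\<not> int p dvd (nh + int q * int r) \<and> (sm \<longrightarrow> \<not> int p dvd (mh + int a * int r)))" for r
  have pri: "prime (int p)" using pr by simp
  have p2: "p \<ge> 2" using pr prime_ge_2_nat by simp
  have pp: "real p > 0" using p2 by simp
  have not_both: "\<not> (p dvd a \<and> p dvd q)"
  proof
    assume "p dvd a \<and> p dvd q"
    hence "p dvd gcd a q" by simp
    thus False using cop pr by (simp add: prime_gt_1_nat)
  qed
  have dvd_int: "int p dvd int x \<longleftrightarrow> p dvd x" for x by simp
  have goal_eq: "card {r. r < p \<and> \<not> int p dvd (nh + int q * int r)
                 \<and> (sm \<longrightarrow> \<not> int p dvd (mh + int a * int r))} = card {r. r < p \<and> G r}"
    unfolding G_def by simp
  show ?thesis
  proof (cases sm)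
    case sm: True
    show ?thesis
    proof (cases "p dvd a \<or> p dvd q")
      case bad: True
      have uv: "uu sm p a q = (real p - 1) / p" "vv sm p a q = - (real p - 1) / p"
        unfolding uu_def vv_def using sm bad by auto
      show ?thesis
      proof (cases "int p dvd h")
        case hd: True
        have "card {r. r < p \<and> G r} = 0"
        proof -
          have "\<not> G r" for r
          proof (cases "p dvd a")
            case True
            hence "\<not> p dvd q" using not_both by auto
            hence nq: "\<not> int p dvd int q" by simp
            have "int p dvd int a" using True by simp
            hence "int p dvd int a * nh - h" using hd by simp
            moreover have "int a * nh - h = int q * mh" using hdef by simp
            ultimately have "int p dvd int q * mh" by simp
            hence "int p dvd mh" using nq pri by (simp add: prime_dvd_mult_iff)
            hence "int p dvd mh + int a * int r" using \<open>int p dvd int a\<close> by simp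
            thus ?thesis unfolding G_def using sm by auto
          next
            case False
            hence pq: "p dvd q" using bad by auto
            hence na: "\<not> int p dvd int a" using not_both by simp
            have "int p dvd int q" using pq by simp
            hence "int p dvd h + int q * mh" using hd by simp
            moreover have "h + int q * mh = int a * nh" using hdef by simp
            ultimately have "int p dvd int a * nh" by simp
            hence "int p dvd nh" using na pri by (simp add: prime_dvd_mult_iff)
            hence "int p dvd nh + int q * int r" using \<open>int p dvd int q\<close> by simp
            thus ?thesis unfolding G_def by auto
          qed
          thus ?thesis by simp
        qed
        moreover have "uu sm p a q + vv sm p a q * 1 = 0" using uv by (simp add: add_divide_distrib[symmetric])
        ultimately show ?thesis using goal_eq hd by simp
      next
        case hn: False
        have "card {r. r < p \<and> G r} \<le> p - 1"
        proof (cases "p dvd a")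
          case True
          hence "\<not> p dvd q" using not_both by auto
          hence nq: "\<not> int p dvd int q" by simp
          obtain r1 where "r1 < p" "int p dvd nh + int q * int r1" using root_exists[OF pr nq] by auto
          thus ?thesis by (intro card_le_minus1[of r1]) (auto simp: G_def)
        next
          case False
          hence na: "\<not> int p dvd int a" by simp
          obtain r1 where "r1 < p" "int p dvd mh + int a * int r1" using root_exists[OF pr na] by auto
          thus ?thesis using sm by (intro card_le_minus1[of r1]) (auto simp: G_def)
        qed
        hence "real (card {r. r < p \<and> G r}) \<le> real p - 1" using p2 by linarith
        thus ?thesis using goal_eq uv hn pp by (simp add: field_simps)
      qed
    next
      case good: False
      have uv: "uu sm p a q = (real p - 2) / p" "vv sm p a q = 1 / p"
        unfolding uu_def vv_def using sm good by auto
      have na: "\<not> int p dvd int a" and nq: "\<not> int p dvd int q" using good by auto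
      obtain r1 where r1: "r1 < p" "int p dvd nh + int q * int r1" using root_exists[OF pr nq] by auto
      obtain r2 where r2: "r2 < p" "int p dvd mh + int a * int r2" using root_exists[OF pr na] by auto
      show ?thesis
      proof (cases "int p dvd h")
        case hd: True
        have "card {r. r < p \<and> G r} \<le> p - 1" using r1 by (intro card_le_minus1[of r1]) (auto simp: G_def)
        hence "real (card {r. r < p \<and> G r}) \<le> real p - 1" using p2 by linarith
        thus ?thesis using goal_eq uv hd pp by (simp add: field_simps)
      next
        case hn: False
        have "r1 \<noteq> r2"
        proof
          assume "r1 = r2"
          hence "int p dvd int a * (nh + int q * int r1) - int q * (mh + int a * int r1)"
            using r1 r2 by (simp add: dvd_diff)
          moreover have "int a * (nh + int q * int r1) - int q * (mh + int a * int r1) = h"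
            using hdef by (simp add: algebra_simps)
          ultimately show False using hn by simp
        qed
        hence "card {r. r < p \<and> G r} \<le> p - 2" using r1 r2 sm
          by (intro card_le_minus2[of r1 p G r2]) (auto simp: G_def)
        hence "real (card {r. r < p \<and> G r}) \<le> real p - 2" using p2 by linarith
        thus ?thesis using goal_eq uv hn pp by (simp add: field_simps)
      qed
    qed
  next
    case sm: False
    show ?thesis
    proof (cases "p dvd q")
      case pq: True
      have uv: "uu sm p a q = 1" "vv sm p a q = -1" unfolding uu_def vv_def using sm pq by auto
      show ?thesis
      proof (cases "int p dvd h")
        case hd: True
        have na: "\<not> int p dvd int a" using pq not_both by simp
        have "int p dvd int q" using pq by simp
        hence "int p dvd h + int q * mh" using hd by simp
        moreover have "h + int q * mh = int a * nh" using hdef by simp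
        ultimately have "int p dvd int a * nh" by simp
        hence "int p dvd nh" using na pri by (simp add: prime_dvd_mult_iff)
        hence "\<not> G r" for r using \<open>int p dvd int q\<close> unfolding G_def by simp
        hence "card {r. r < p \<and> G r} = 0" by simp
        thus ?thesis using goal_eq uv hd by simp
      next
        case hn: False
        have "card {r. r < p \<and> G r} \<le> p" by (rule card_le_p)
        thus ?thesis using goal_eq uv hn by simp
      qed
    next
      case pq: False
      have uv: "uu sm p a q = (real p - 1) / p" "vv sm p a q = 0" unfolding uu_def vv_def using sm pq by auto
      have nq: "\<not> int p dvd int q" using pq by simp
      obtain r1 where r1: "r1 < p" "int p dvd nh + int q * int r1" using root_exists[OF pr nq] by auto
      have "card {r. r < p \<and> G r} \<le> p - 1" using r1 by (intro card_le_minus1[of r1]) (auto simp: G_def)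
      hence "real (card {r. r < p \<and> G r}) \<le> real p - 1" using p2 by linarith
      thus ?thesis using goal_eq uv pp by (simp add: field_simps)
    qed
  qed
qed



lemma uv_mean:
  assumes "p \<ge> 2"
  shows "uu sm p a q + vv sm p a q / p = ((real p - 1) / p) * (if sm then (real p - 1) / p else 1)"
  using assms unfolding uu_def vv_def by (auto simp: field_simps power2_eq_square)

definition badp :: "bool \<Rightarrow> nat \<Rightarrow> nat \<Rightarrow> nat \<Rightarrow> bool" where
  "badp sm p a q = (if sm then (p dvd a \<or> p dvd q) else p dvd q)"

lemma uv_abs:
  assumes p2: "p \<ge> 2" and p3: "\<not> sm \<Longrightarrow> p \<ge> 3"
  shows "\<bar>uu sm p a q\<bar> + \<bar>vv sm p a q\<bar> \<le>
     (((real p - 1) / p) * (if sm then (real p - 1) / p else 1))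
     * ((if sm then real p / (real p - 1) else 1) * (if badp sm p a q then 3 else 1))"
proof -
  have pp: "real p \<ge> 2" using p2 by simp
  show ?thesis
  proof (cases sm)
    case True
    show ?thesis
    proof (cases "p dvd a \<or> p dvd q")
      case True
      have "\<bar>uu sm p a q\<bar> + \<bar>vv sm p a q\<bar> = 2 * (real p - 1) / p"
        using \<open>sm\<close> True pp unfolding uu_def vv_def by (simp add: abs_div_pos)
      moreover have "(((real p - 1) / p) * ((real p - 1) / p)) * (real p / (real p - 1) * 3) = 3 * (real p - 1) / p"
        using pp by (simp add: field_simps power2_eq_square)
      ultimately show ?thesis using \<open>sm\<close> True pp unfolding badp_def by (simp add: divide_right_mono)
    next
      case False
      have "\<bar>uu sm p a q\<bar> + \<bar>vv sm p a q\<bar> = (real p - 1) / p"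
        using \<open>sm\<close> False pp unfolding uu_def vv_def by (simp add: abs_div_pos add_divide_distrib[symmetric])
      moreover have "(((real p - 1) / p) * ((real p - 1) / p)) * (real p / (real p - 1) * 1) = (real p - 1) / p"
        using pp by (simp add: field_simps power2_eq_square)
      ultimately show ?thesis using \<open>sm\<close> False pp unfolding badp_def by simp
    qed
  next
    case False
    have p3': "real p \<ge> 3" using p3 False by simp
    show ?thesis
    proof (cases "p dvd q")
      case True
      have "\<bar>uu sm p a q\<bar> + \<bar>vv sm p a q\<bar> = 2"
        using False True unfolding uu_def vv_def by simp
      moreover have "2 \<le> ((real p - 1) / p) * 3" using p3' by (simp add: field_simps)
      ultimately show ?thesis using False True unfolding badp_def by simp
    next
      case nq: False
      have "\<bar>uu sm p a q\<bar> + \<bar>vv sm p a q\<bar> = (real p - 1) / p"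
        using False nq pp unfolding uu_def vv_def by (simp add: abs_div_pos)
      thus ?thesis using False nq unfolding badp_def by simp
    qed
  qed
qed

lemma telescope0: "(\<Prod>k\<in>{2..Suc n}. real k / (real k - 1)) = real (Suc n)"
proof (induction n)
  case 0 then show ?case by simp
next
  case (Suc n)
  have "{2..Suc (Suc n)} = insert (Suc (Suc n)) {2..Suc n}" by auto
  hence "(\<Prod>k\<in>{2..Suc (Suc n)}. real k / (real k - 1)) = (real (Suc (Suc n)) / real (Suc n)) * (\<Prod>k\<in>{2..Suc n}. real k / (real k - 1))"
    by simp
  also have "\<dots> = real (Suc (Suc n))" using Suc by simp
  finally show ?case .
qed

lemma telescope: "n \<ge> 1 \<Longrightarrow> (\<Prod>k\<in>{2..n}. real k / (real k - 1)) = real n"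
  using telescope0[of "n - 1"] by simp

lemma mertens_crude:
  fixes \<beta> :: real
  assumes "\<beta> \<ge> 1"
  shows "(\<Prod>p\<in>{p. prime p \<and> real p \<le> \<beta>}. real p / (real p - 1)) \<le> \<beta>"
proof -
  define n where "n = nat \<lfloor>\<beta>\<rfloor>"
  have n1: "n \<ge> 1" unfolding n_def using assms by linarith
  have nb: "real n \<le> \<beta>" unfolding n_def using assms by linarith
  have sub: "{p. prime p \<and> real p \<le> \<beta>} \<subseteq> {2..n}"
  proof
    fix p assume "p \<in> {p. prime p \<and> real p \<le> \<beta>}"
    hence "prime p" "real p \<le> \<beta>" by auto
    hence "p \<ge> 2" "p \<le> n" unfolding n_def using prime_ge_2_nat by (auto simp: le_nat_floor)
    thus "p \<in> {2..n}" by auto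
  qed
  have "(\<Prod>p\<in>{p. prime p \<and> real p \<le> \<beta>}. real p / (real p - 1)) \<le> (\<Prod>k\<in>{2..n}. real k / (real k - 1))"
  proof (rule prod_mono2[OF _ sub])
    show "finite {2..n}" by simp
    show "1 \<le> real b / (real b - 1)" if "b \<in> {2..n} - {p. prime p \<and> real p \<le> \<beta>}" for b
      using that by (simp add: field_simps)
    show "0 \<le> real a / (real a - 1)" if "a \<in> {p. prime p \<and> real p \<le> \<beta>}" for a
      using that prime_ge_2_nat[of a] by simp
  qed
  also have "\<dots> = real n" by (rule telescope[OF n1])
  finally show ?thesis using nb by simp
qed

lemma prod_pf_dvd:
  fixes N :: nat
  assumes "N > 0"
  shows "(\<Prod>(prime_factors N)) dvd N"
proof -
  have "\<forall>p\<in>prime_factors N. int p dvd int N" by (auto simp: in_prime_factors_iff)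
  hence "int (\<Prod>(prime_factors N)) dvd int N"
    using prime_set_dvd[of "prime_factors N" "int N"] by auto
  thus ?thesis by (simp only: of_nat_dvd_iff)
qed

lemma omega_bound:
  fixes K N :: nat
  assumes K: "K \<ge> 1" and N: "N > 0"
  shows "K ^ card (prime_factors N) \<le> K ^ K * N"
proof -
  define A where "A = {p \<in> prime_factors N. p < K}"
  define B where "B = {p \<in> prime_factors N. \<not> p < K}"
  have fin: "finite A" "finite B" unfolding A_def B_def by auto
  have un: "prime_factors N = A \<union> B" "A \<inter> B = {}" unfolding A_def B_def by auto
  have cardA: "card A \<le> K"
  proof -
    have "A \<subseteq> {..<K}" unfolding A_def by auto
    hence "card A \<le> card {..<K}" by (intro card_mono) auto
    thus ?thesis by simp
  qed
  have "K ^ card B = (\<Prod>p\<in>B. K)" by simp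
  also have "\<dots> \<le> (\<Prod>p\<in>B. p)" by (intro prod_mono) (auto simp: B_def)
  also have "\<dots> \<le> (\<Prod>p\<in>prime_factors N. p)"
  proof -
    have "(\<Prod>p\<in>B. p) dvd (\<Prod>p\<in>prime_factors N. p)"
      by (rule prod_dvd_prod_subset) (auto simp: B_def)
    moreover have "(\<Prod>p\<in>prime_factors N. p) > 0"
      by (intro prod_pos) (auto simp: in_prime_factors_iff prime_gt_0_nat)
    ultimately show ?thesis by (intro dvd_imp_le) auto
  qed
  also have "\<dots> \<le> N" using prod_pf_dvd[OF N] N by (intro dvd_imp_le) auto
  finally have b: "K ^ card B \<le> N" .
  have a: "K ^ card A \<le> K ^ K" using cardA K by (intro power_increasing) auto
  have "K ^ card (prime_factors N) = K ^ card A * K ^ card B"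
    unfolding un(1) using fin un(2) by (simp add: card_Un_disjoint power_add)
  also have "\<dots> \<le> K ^ K * N" using a b by (intro mult_mono) auto
  finally show ?thesis .
qed

lemma poly_exp_bound:
  fixes c :: real
  assumes c: "0 < c" "c < 1"
  shows "\<exists>K. \<forall>x\<ge>0. x ^ n * c powr x \<le> K"
proof -
  define k where "k = - ln c"
  have k: "k > 0" unfolding k_def using c by simp
  have cp: "c powr x = exp (- k * x)" for x unfolding k_def powr_def using c by simp
  show ?thesis
  proof (intro exI allI impI)
    fix x :: real assume x: "x \<ge> 0"
    show "x ^ n * c powr x \<le> (real n / k + 1) ^ n"
    proof (cases "n = 0")
      case True
      have "c powr x \<le> 1" using c x by (simp add: powr_le1)
      thus ?thesis using True by simp
    next
      case False
      hence n: "real n > 0" by simp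
      define y where "y = k * x / real n"
      have y: "y \<ge> 0" unfolding y_def using k x n by simp
      have xe: "x = (real n / k) * y" unfolding y_def using k n by simp
      have "x ^ n = (real n / k) ^ n * y ^ n" by (subst xe) (rule power_mult_distrib)
      also have "\<dots> \<le> (real n / k) ^ n * exp y ^ n"
      proof -
        have "y \<le> exp y" using exp_ge_add_one_self[of y] by linarith
        thus ?thesis using y k n by (intro mult_left_mono power_mono) auto
      qed
      also have "exp y ^ n = exp (k * x)" unfolding y_def using n by (simp add: exp_of_nat_mult[symmetric])
      finally have "x ^ n * c powr x \<le> (real n / k) ^ n * exp (k * x) * exp (- k * x)"
        unfolding cp by (intro mult_right_mono) auto
      also have "\<dots> = (real n / k) ^ n" by (simp add: exp_minus_inverse mult.assoc exp_add[symmetric])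
      also have "\<dots> \<le> (real n / k + 1) ^ n" using k by (intro power_mono) auto
      finally show ?thesis .
    qed
  qed
qed



definition goodn :: "nat set \<Rightarrow> nat set \<Rightarrow> nat \<Rightarrow> nat \<Rightarrow> int \<Rightarrow> nat \<Rightarrow> bool" where
  "goodn Pr Ps a q h n = ((\<forall>p\<in>Pr. \<not> p dvd n) \<and> int q dvd (int n * int a - h)
      \<and> (\<forall>p\<in>Ps. \<not> int p dvd ((int n * int a - h) div int q)))"

lemma goodn_periodic:
  assumes fin: "finite Pr" and sub: "Ps \<subseteq> Pr" and q: "q > 0"
  shows "goodn Pr Ps a q h (n + q * \<Prod>Pr) = goodn Pr Ps a q h n"
proof -
  define P where "P = \<Prod>Pr"
  have dP: "p dvd P" if "p \<in> Pr" for p unfolding P_def using dvd_prodI[OF fin that, of id] by simp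
  have e1: "int (n + q * P) * int a - h = (int n * int a - h) + int q * (int P * int a)"
    by (simp add: algebra_simps)
  have qd: "int q dvd (int (n + q * P) * int a - h) \<longleftrightarrow> int q dvd (int n * int a - h)"
    unfolding e1 by (simp add: dvd_add_left_iff)
  have e2: "(int (n + q * P) * int a - h) div int q = (int n * int a - h) div int q + int P * int a"
    unfolding e1 using q by simp
  have c1: "(\<forall>p\<in>Pr. \<not> p dvd (n + q * P)) \<longleftrightarrow> (\<forall>p\<in>Pr. \<not> p dvd n)"
    using dP by (auto simp: dvd_add_left_iff)
  have c2: "(\<forall>p\<in>Ps. \<not> int p dvd ((int (n + q * P) * int a - h) div int q))
       \<longleftrightarrow> (\<forall>p\<in>Ps. \<not> int p dvd ((int n * int a - h) div int q))"
  proof -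
    have "int p dvd int P * int a" if "p \<in> Ps" for p using dP sub that by auto
    thus ?thesis unfolding e2 by (auto simp: dvd_add_left_iff)
  qed
  show ?thesis unfolding goodn_def P_def[symmetric] using qd c1 c2 by blast
qed

lemma exists_nh:
  fixes a q :: nat and h :: int
  assumes cop: "coprime a q" and q: "q > 0"
  shows "\<exists>nh. nh < q \<and> int q dvd (int nh * int a - h)"
proof -
  have "coprime (int a) (int q)" using cop by simp
  hence g: "gcd (int a) (int q) = 1" by (simp add: coprime_iff_gcd_eq_1)
  obtain x y where xy: "x * int a + y * int q = 1" using bezout_int[of "int a" "int q"] g by auto
  define n0 where "n0 = (h * x) mod int q"
  have n0: "0 \<le> n0" "n0 < int q" unfolding n0_def using q by auto
  have "int q dvd (h * x) - n0" unfolding n0_def by (simp add: mod_eq_dvd_iff[symmetric] mod_diff_eq[symmetric])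
  hence d1: "int q dvd ((h * x) - n0) * int a" by simp
  have "n0 * int a - h = h * (x * int a - 1) - ((h * x) - n0) * int a" by (simp add: algebra_simps)
  also have "\<dots> = h * (- y * int q) - ((h * x) - n0) * int a"
  proof -
    have e: "x * int a - 1 = - y * int q" using xy by linarith
    show ?thesis by (simp only: e)
  qed
  finally have "int q dvd n0 * int a - h" using d1 by simp
  moreover have "int (nat n0) = n0" using n0 by simp
  moreover have "nat n0 < q" using n0 by linarith
  ultimately show ?thesis by (intro exI[of _ "nat n0"]) simp
qed

lemma count_goodn:
  fixes a q :: nat and Pr Ps :: "nat set" and h :: int
  assumes q: "q > 0" and cop: "coprime a q" and fin: "finite Pr" and pr: "\<forall>p\<in>Pr. prime p"
    and sub: "Ps \<subseteq> Pr"
  shows "real (card {n. n < q * \<Prod>Pr \<and> goodn Pr Ps a q h n})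
     \<le> (\<Prod>p\<in>Pr. real p * (uu (p \<in> Ps) p a q + vv (p \<in> Ps) p a q * (if int p dvd h then 1 else 0)))"
proof -
  define P where "P = \<Prod>Pr"
  obtain nh where nh: "nh < q" "int q dvd (int nh * int a - h)" using exists_nh[OF cop q] by blast
  define mh where "mh = (int nh * int a - h) div int q"
  have mh: "int q * mh = int nh * int a - h" unfolding mh_def using nh(2) by simp
  have hdef: "int a * int nh - int q * mh = h" using mh by (simp add: algebra_simps)
  define C where "C p r = (\<not> int p dvd (int nh + int q * int r) \<and> (p \<in> Ps \<longrightarrow> \<not> int p dvd (mh + int a * int r)))" for p r
  have modp: "int p dvd (c + b * int t) \<longleftrightarrow> int p dvd (c + b * int (t mod p))" for p :: nat and c b :: int and t :: nat
  proof -
    have "c + b * int t = (c + b * int (t mod p)) + int p * (b * int (t div p))"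
    proof -
      have "int t = int (t mod p) + int p * int (t div p)"
        by (metis of_nat_add of_nat_mult mod_mult_div_eq add.commute)
      thus ?thesis by (simp add: algebra_simps)
    qed
    hence "int p dvd (c + b * int t) \<longleftrightarrow> int p dvd ((c + b * int (t mod p)) + int p * (b * int (t div p)))"
      by (simp only:)
    also have "\<dots> \<longleftrightarrow> int p dvd (c + b * int (t mod p))"
      by (rule dvd_add_left_iff) simp
    finally show ?thesis .
  qed
  have char: "goodn Pr Ps a q h (nh + q * t) \<longleftrightarrow> (\<forall>p\<in>Pr. C p (t mod p))" for t
  proof -
    have e1: "int (nh + q * t) * int a - h = int q * (mh + int a * int t)"
      using mh by (simp add: algebra_simps)
    have qd: "int q dvd (int (nh + q * t) * int a - h)" unfolding e1 by simp
    have dv: "(int (nh + q * t) * int a - h) div int q = mh + int a * int t" unfolding e1 using q by simp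
    have "(p dvd (nh + q * t)) \<longleftrightarrow> int p dvd (int nh + int q * int t)" for p
      by (metis of_nat_add of_nat_dvd_iff of_nat_mult)
    hence a1: "(p dvd (nh + q * t)) \<longleftrightarrow> int p dvd (int nh + int q * int (t mod p))" for p
      using modp by blast
    have a2: "int p dvd (mh + int a * int t) \<longleftrightarrow> int p dvd (mh + int a * int (t mod p))" for p
      using modp by blast
    show ?thesis unfolding goodn_def C_def dv using qd a1 a2 sub by auto
  qed
  have img: "{n. n < q * P \<and> goodn Pr Ps a q h n} = (\<lambda>t. nh + q * t) ` {t. t < P \<and> (\<forall>p\<in>Pr. C p (t mod p))}"
  proof (intro set_eqI iffI)
    fix n assume "n \<in> {n. n < q * P \<and> goodn Pr Ps a q h n}"
    hence n: "n < q * P" "goodn Pr Ps a q h n" by auto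
    have qn: "int q dvd (int n * int a - h)" using n(2) unfolding goodn_def by auto
    have "int q dvd (int n * int a - h) - (int nh * int a - h)" using qn nh(2) by (rule dvd_diff)
    hence "int q dvd (int n - int nh) * int a" by (simp add: algebra_simps)
    moreover have "coprime (int q) (int a)" using cop by (simp add: coprime_commute)
    ultimately have "int q dvd int n - int nh" using coprime_dvd_mult_left_iff by blast
    hence "int n mod int q = int nh mod int q" by (simp add: mod_eq_dvd_iff)
    hence "n mod q = nh" using nh(1) by (metis of_nat_eq_iff of_nat_mod mod_less)
    hence nq: "n = nh + q * (n div q)" by (metis mod_mult_div_eq)
    have "n div q < P" using n(1) q by (simp add: div_less_iff_less_mult mult.commute)
    moreover have "\<forall>p\<in>Pr. C p ((n div q) mod p)" using char[of "n div q"] n(2) nq by simp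
    ultimately show "n \<in> (\<lambda>t. nh + q * t) ` {t. t < P \<and> (\<forall>p\<in>Pr. C p (t mod p))}"
      using nq by (intro image_eqI[of _ _ "n div q"]) auto
  next
    fix n assume "n \<in> (\<lambda>t. nh + q * t) ` {t. t < P \<and> (\<forall>p\<in>Pr. C p (t mod p))}"
    then obtain t where t: "t < P" "\<forall>p\<in>Pr. C p (t mod p)" "n = nh + q * t" by auto
    have "nh + q * t < q * P"
    proof -
      have "Suc t \<le> P" using t(1) by simp
      hence "q * Suc t \<le> q * P" by (rule mult_le_mono2)
      thus ?thesis using nh(1) by simp
    qed
    thus "n \<in> {n. n < q * P \<and> goodn Pr Ps a q h n}" using t char by auto
  qed
  have inj: "inj_on (\<lambda>t. nh + q * t) {t. t < P \<and> (\<forall>p\<in>Pr. C p (t mod p))}"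
    using q by (auto simp: inj_on_def)
  have "card {n. n < q * P \<and> goodn Pr Ps a q h n} = card {t. t < P \<and> (\<forall>p\<in>Pr. C p (t mod p))}"
    unfolding img using card_image[OF inj] .
  also have "\<dots> = (\<Prod>p\<in>Pr. card {r. r < p \<and> C p r})"
    unfolding P_def by (rule crt_count[OF fin pr])
  finally have ce: "real (card {n. n < q * P \<and> goodn Pr Ps a q h n}) = (\<Prod>p\<in>Pr. real (card {r. r < p \<and> C p r}))"
    by simp
  have "(\<Prod>p\<in>Pr. real (card {r. r < p \<and> C p r}))
      \<le> (\<Prod>p\<in>Pr. real p * (uu (p \<in> Ps) p a q + vv (p \<in> Ps) p a q * (if int p dvd h then 1 else 0)))"
  proof (rule prod_mono)
    fix p assume "p \<in> Pr"
    hence prp: "prime p" using pr by auto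
    show "0 \<le> real (card {r. r < p \<and> C p r}) \<and> real (card {r. r < p \<and> C p r})
      \<le> real p * (uu (p \<in> Ps) p a q + vv (p \<in> Ps) p a q * (if int p dvd h then 1 else 0))"
      using local_count[OF prp cop hdef, of "p \<in> Ps"] unfolding C_def by simp
  qed
  thus ?thesis using ce unfolding P_def by simp
qed



definition Iv :: "real \<Rightarrow> real set" where "Iv x = {x - 1/2 <..< x + 1/2}"

lemma Iv_lmeas: "Iv x \<in> lmeasurable" unfolding Iv_def by simp

lemma meas_Iv: "measure lebesgue (Iv x) = 1" unfolding Iv_def by simp

lemma meas_Iv_inter: "measure lebesgue (Iv x \<inter> Iv y) = max 0 (1 - \<bar>x - y\<bar>)"
proof -
  have e: "Iv x \<inter> Iv y = {max x y - 1/2 <..< min x y + 1/2}" unfolding Iv_def by auto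
  show ?thesis
  proof (cases "\<bar>x - y\<bar> \<le> 1")
    case True
    hence "max x y - 1/2 \<le> min x y + 1/2" by (auto simp: abs_le_iff max_def min_def)
    moreover have "min x y + 1/2 - (max x y - 1/2) = 1 - \<bar>x - y\<bar>" by (auto simp: max_def min_def abs_if)
    ultimately show ?thesis unfolding e using True by simp
  next
    case False
    hence "x + 1 < y \<or> y + 1 < x" by (auto simp: abs_le_iff)
    hence "{max x y - 1/2 <..< min x y + 1/2} = {}" by (auto simp: max_def min_def)
    thus ?thesis unfolding e using False by simp
  qed
qed

lemma lpf_iff:
  fixes n :: nat and \<alpha> :: real
  assumes "n \<ge> 1"
  shows "lpf n > ereal \<alpha> \<longleftrightarrow> (\<forall>p. prime p \<and> real p \<le> \<alpha> \<longrightarrow> \<not> p dvd n)"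
proof (cases "n = 1")
  case True
  thus ?thesis unfolding lpf_def by (auto simp: prime_gt_1_nat dest: dvd_imp_le)
next
  case False
  hence n2: "n \<ge> 2" using assms by simp
  have ne: "prime_factors n \<noteq> {}"
  proof -
    obtain p where "prime p" "p dvd n" using prime_factor_nat[of n] n2 by auto
    hence "p \<in> prime_factors n" using n2 by (auto simp: in_prime_factors_iff)
    thus ?thesis by auto
  qed
  have "lpf n > ereal \<alpha> \<longleftrightarrow> \<alpha> < real (Min (prime_factors n))"
    unfolding lpf_def using False by simp
  also have "\<dots> \<longleftrightarrow> (\<forall>p\<in>prime_factors n. \<alpha> < real p)"
  proof
    assume h: "\<alpha> < real (Min (prime_factors n))"
    show "\<forall>p\<in>prime_factors n. \<alpha> < real p"
    proof
      fix p assume "p \<in> prime_factors n"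
      hence "Min (prime_factors n) \<le> p" by simp
      thus "\<alpha> < real p" using h by linarith
    qed
  next
    assume "\<forall>p\<in>prime_factors n. \<alpha> < real p"
    moreover have "Min (prime_factors n) \<in> prime_factors n" using ne by simp
    ultimately show "\<alpha> < real (Min (prime_factors n))" by blast
  qed
  also have "\<dots> \<longleftrightarrow> (\<forall>p. prime p \<and> real p \<le> \<alpha> \<longrightarrow> \<not> p dvd n)"
  proof
    assume h: "\<forall>p\<in>prime_factors n. \<alpha> < real p"
    show "\<forall>p. prime p \<and> real p \<le> \<alpha> \<longrightarrow> \<not> p dvd n"
    proof (intro allI impI)
      fix p assume p: "prime p \<and> real p \<le> \<alpha>"
      show "\<not> p dvd n"
      proof
        assume "p dvd n"
        hence "p \<in> prime_factors n" using p n2 by (auto simp: in_prime_factors_iff)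
        thus False using h p by auto
      qed
    qed
  next
    assume h: "\<forall>p. prime p \<and> real p \<le> \<alpha> \<longrightarrow> \<not> p dvd n"
    show "\<forall>p\<in>prime_factors n. \<alpha> < real p"
    proof
      fix p assume "p \<in> prime_factors n"
      hence "prime p" "p dvd n" by (auto simp: in_prime_factors_iff)
      thus "\<alpha> < real p" using h by (meson not_less)
    qed
  qed
  finally show ?thesis .
qed

definition An :: "real \<Rightarrow> nat set" where
  "An \<alpha> = {n. n \<ge> 1 \<and> (\<forall>p. prime p \<and> real p \<le> \<alpha> \<longrightarrow> \<not> p dvd n)}"

lemma Nset_eq: "Nset \<alpha> = (\<Union>n\<in>An \<alpha>. Iv (real n * \<alpha>))"
proof -
  have "{n::nat. n \<ge> 1 \<and> lpf n > ereal \<alpha>} = An \<alpha>" unfolding An_def using lpf_iff by auto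
  thus ?thesis unfolding Nset_def Iv_def by simp
qed

lemma Nset_open: "open (Nset \<alpha>)" unfolding Nset_eq Iv_def by auto

lemma Nset_fmeas: "Nset \<alpha> \<inter> {0..T} \<in> fmeasurable lebesgue"
proof -
  have "{0..T} \<inter> Nset \<alpha> \<in> fmeasurable lebesgue"
  proof (rule fmeasurable_Int_fmeasurable)
    show "Nset \<alpha> \<in> sets lebesgue" using Nset_open[of \<alpha>] by auto
  qed simp
  thus ?thesis by (simp add: Int_commute)
qed

lemma lower_meas:
  fixes \<alpha> T :: real and N1 :: nat
  assumes a1: "\<alpha> \<ge> 1" and NT: "real N1 * \<alpha> + 1/2 \<le> T"
  shows "real (card {n. 1 \<le> n \<and> n \<le> N1 \<and> n \<in> An \<alpha>}) \<le> measure lebesgue (Nset \<alpha> \<inter> {0..T})"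
proof -
  define F where "F = {n. 1 \<le> n \<and> n \<le> N1 \<and> n \<in> An \<alpha>}"
  have finF: "finite F" unfolding F_def by (rule finite_subset[of _ "{..N1}"]) auto
  have sub: "(\<Union>n\<in>F. Iv (real n * \<alpha>)) \<subseteq> Nset \<alpha> \<inter> {0..T}"
  proof
    fix x assume "x \<in> (\<Union>n\<in>F. Iv (real n * \<alpha>))"
    then obtain n where n: "n \<in> F" "x \<in> Iv (real n * \<alpha>)" by auto
    have "real n * \<alpha> \<le> real N1 * \<alpha>" using n(1) a1 unfolding F_def by (intro mult_right_mono) auto
    moreover have "1 * 1 \<le> real n * \<alpha>" using n(1) a1 unfolding F_def by (intro mult_mono) auto
    ultimately have "0 \<le> x" "x \<le> T" using n(2) NT unfolding Iv_def by auto
    moreover have "x \<in> Nset \<alpha>" unfolding Nset_eq using n F_def by auto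
    ultimately show "x \<in> Nset \<alpha> \<inter> {0..T}" by auto
  qed
  have disj: "pairwise (\<lambda>i j. disjnt (Iv (real i * \<alpha>)) (Iv (real j * \<alpha>))) F"
  proof (rule pairwiseI)
    fix i j assume "i \<in> F" "j \<in> F" "i \<noteq> j"
    hence "\<bar>real i - real j\<bar> \<ge> 1" by linarith
    hence "\<bar>real i - real j\<bar> * \<alpha> \<ge> 1 * 1" using a1 by (intro mult_mono) auto
    hence "\<bar>real i * \<alpha> - real j * \<alpha>\<bar> \<ge> 1" using a1 by (simp add: abs_mult left_diff_distrib[symmetric])
    thus "disjnt (Iv (real i * \<alpha>)) (Iv (real j * \<alpha>))" unfolding disjnt_def Iv_def by auto
  qed
  have "measure lebesgue (\<Union>n\<in>F. Iv (real n * \<alpha>)) = (\<Sum>n\<in>F. measure lebesgue (Iv (real n * \<alpha>)))"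
    by (rule measure_UNION'[OF finF _ disj]) (simp add: Iv_lmeas)
  also have "\<dots> = real (card F)" by (simp add: meas_Iv)
  finally have e: "measure lebesgue (\<Union>n\<in>F. Iv (real n * \<alpha>)) = real (card F)" .
  have "measure lebesgue (\<Union>n\<in>F. Iv (real n * \<alpha>)) \<le> measure lebesgue (Nset \<alpha> \<inter> {0..T})"
    by (rule measure_mono_fmeasurable[OF sub _ Nset_fmeas])
       (rule fmeasurableD, rule fmeasurable.finite_UN[OF finF], simp add: Iv_lmeas)
  thus ?thesis using e unfolding F_def by simp
qed



lemma upper_meas:
  fixes \<alpha> \<beta> T :: real and a q :: nat
  assumes b: "\<beta> > 0" and a: "a > 0" and q: "q > 0" and al: "\<alpha> = real a * \<beta> / real q"
    and ab: "\<beta> \<le> \<alpha>"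
  defines "Pr \<equiv> {p. prime p \<and> real p \<le> \<alpha>}" and "Ps \<equiv> {p. prime p \<and> real p \<le> \<beta>}"
    and "H \<equiv> real q / \<beta>" and "N \<equiv> nat \<lfloor>(T + 1) / \<alpha>\<rfloor>"
  shows "measure lebesgue (Nset \<alpha> \<inter> Nset \<beta> \<inter> {0..T})
    \<le> (\<Sum>h\<in>{-\<lceil>H\<rceil>..\<lceil>H\<rceil>}. tri H h * real (card {n. 1 \<le> n \<and> n \<le> N \<and> goodn Pr Ps a q h n}))"
proof -
  define Z where "Z = {-\<lceil>H\<rceil>..\<lceil>H\<rceil>}"
  define mm where "mm h n = (int n * int a - h) div int q" for h :: int and n :: nat
  define G where "G h = {n. 1 \<le> n \<and> n \<le> N \<and> goodn Pr Ps a q h n}" for h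
  define F where "F hn = Iv (real (snd hn) * \<alpha>) \<inter> Iv (real_of_int (mm (fst hn) (snd hn)) * \<beta>)" for hn
  define I where "I = Sigma Z G"
  have alpos: "\<alpha> > 0" using b ab by linarith
  have Hpos: "H > 0" unfolding H_def using q b by simp
  have finZ: "finite Z" unfolding Z_def by simp
  have finG: "finite (G h)" for h unfolding G_def by (rule finite_subset[of _ "{..N}"]) auto
  have finI: "finite I" unfolding I_def using finZ finG by simp
  have key: "real n * \<alpha> - real_of_int m * \<beta> = real_of_int (int n * int a - m * int q) / H" for n m
    unfolding H_def al using q b by (simp add: field_simps)
  have sub: "Nset \<alpha> \<inter> Nset \<beta> \<inter> {0..T} \<subseteq> (\<Union>i\<in>I. F i)"
  proof
    fix x assume x: "x \<in> Nset \<alpha> \<inter> Nset \<beta> \<inter> {0..T}"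
    then obtain n where n: "n \<in> An \<alpha>" "x \<in> Iv (real n * \<alpha>)" unfolding Nset_eq by auto
    from x obtain m where m: "m \<in> An \<beta>" "x \<in> Iv (real m * \<beta>)" unfolding Nset_eq by auto
    define h where "h = int n * int a - int m * int q"
    have d: "\<bar>real n * \<alpha> - real m * \<beta>\<bar> < 1" using n(2) m(2) unfolding Iv_def by auto
    have "real n * \<alpha> - real_of_int (int m) * \<beta> = real_of_int h / H" unfolding h_def by (rule key)
    hence "\<bar>real_of_int h\<bar> / H < 1" using d Hpos by simp
    hence hH: "\<bar>real_of_int h\<bar> < H" using Hpos by (simp add: field_simps)
    hence "real_of_int \<bar>h\<bar> < H" by simp
    hence "real_of_int \<bar>h\<bar> \<le> real_of_int \<lceil>H\<rceil>" using ceiling_correct[of H] by linarith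
    hence "\<bar>h\<bar> \<le> \<lceil>H\<rceil>" by (simp only: of_int_le_iff)
    hence hZ: "h \<in> Z" unfolding Z_def by (auto simp: abs_le_iff)
    have mmv: "mm h n = int m" unfolding mm_def h_def using q by simp
    have nN: "n \<le> N"
    proof -
      have "real n * \<alpha> < T + 1" using n(2) x unfolding Iv_def by auto
      hence "real n \<le> (T + 1) / \<alpha>" using alpos by (simp add: field_simps)
      thus ?thesis unfolding N_def by (simp add: le_nat_floor nat_le_iff le_floor_iff)
    qed
    have g: "goodn Pr Ps a q h n"
    proof -
      have "\<forall>p\<in>Pr. \<not> p dvd n" using n(1) unfolding An_def Pr_def by auto
      moreover have "int n * int a - h = int q * int m" unfolding h_def by simp
      moreover have "\<forall>p\<in>Ps. \<not> int p dvd int m" using m(1) unfolding An_def Ps_def by auto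
      ultimately show ?thesis unfolding goodn_def using q by simp
    qed
    have "n \<ge> 1" using n(1) unfolding An_def by auto
    hence "(h, n) \<in> I" unfolding I_def G_def using hZ nN g by auto
    moreover have "x \<in> F (h, n)" unfolding F_def using n(2) m(2) mmv by simp
    ultimately show "x \<in> (\<Union>i\<in>I. F i)" by blast
  qed
  have Fl: "F i \<in> fmeasurable lebesgue" for i unfolding F_def
    by (rule fmeasurable_Int_fmeasurable) (auto simp: Iv_lmeas intro: fmeasurableD)
  have Sset: "Nset \<alpha> \<inter> Nset \<beta> \<inter> {0..T} \<in> sets lebesgue"
  proof -
    have "Nset \<alpha> \<in> sets lebesgue" "Nset \<beta> \<in> sets lebesgue" using Nset_open by auto
    thus ?thesis by auto
  qed
  have "measure lebesgue (Nset \<alpha> \<inter> Nset \<beta> \<inter> {0..T}) \<le> measure lebesgue (\<Union>i\<in>I. F i)"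
    by (rule measure_mono_fmeasurable[OF sub Sset]) (rule fmeasurable.finite_UN[OF finI Fl])
  also have "\<dots> \<le> (\<Sum>i\<in>I. measure lebesgue (F i))"
    by (rule measure_UNION_le[OF finI]) (simp add: Fl fmeasurableD)
  also have "\<dots> = (\<Sum>i\<in>I. tri H (fst i))"
  proof (rule sum.cong[OF refl])
    fix i assume "i \<in> I"
    then obtain h n where i: "i = (h, n)" "h \<in> Z" "n \<in> G h" unfolding I_def by auto
    have "int q dvd int n * int a - h" using i(3) unfolding G_def goodn_def by auto
    hence "mm h n * int q = int n * int a - h" unfolding mm_def by simp
    hence "int n * int a - mm h n * int q = h" by simp
    hence "real n * \<alpha> - real_of_int (mm h n) * \<beta> = real_of_int h / H" using key[of n "mm h n"] by simp
    hence "measure lebesgue (F i) = max 0 (1 - \<bar>real_of_int h / H\<bar>)"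
      unfolding F_def i(1) using meas_Iv_inter by simp
    also have "\<dots> = tri H h" unfolding tri_def using Hpos by simp
    finally show "measure lebesgue (F i) = tri H (fst i)" using i by simp
  qed
  also have "\<dots> = (\<Sum>h\<in>Z. \<Sum>n\<in>G h. tri H h)"
    unfolding I_def using sum.Sigma[OF finZ, of G "\<lambda>h n. tri H h"] finG by (simp add: case_prod_beta)
  also have "\<dots> = (\<Sum>h\<in>Z. tri H h * real (card (G h)))" by (simp add: mult.commute)
  finally show ?thesis unfolding Z_def G_def .
qed



lemma rat_lim:
  fixes x1 x2 y1 y2 z1 z2 D :: real
  assumes y1: "y1 > 0" and z1: "z1 > 0"
  shows "((\<lambda>T. T * (T * x1 + x2) * D / ((T * y1 - y2) * (T * z1 - z2))) \<longlongrightarrow> x1 * D / (y1 * z1)) at_top"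
proof -
  have inv0: "((\<lambda>T::real. inverse T) \<longlongrightarrow> 0) at_top"
    by (rule tendsto_inverse_0_at_top[OF filterlim_ident])
  have lim: "((\<lambda>T. (x1 + x2 * inverse T) * D / ((y1 - y2 * inverse T) * (z1 - z2 * inverse T)))
      \<longlongrightarrow> (x1 + x2 * 0) * D / ((y1 - y2 * 0) * (z1 - z2 * 0))) at_top"
    using y1 z1 by (intro tendsto_intros inv0) auto
  have ev: "eventually (\<lambda>T. (x1 + x2 * inverse T) * D / ((y1 - y2 * inverse T) * (z1 - z2 * inverse T))
      = T * (T * x1 + x2) * D / ((T * y1 - y2) * (T * z1 - z2))) at_top"
    using eventually_gt_at_top[of 0]
  proof eventually_elim
    case (elim T)
    have a: "x1 + x2 * inverse T = (T * x1 + x2) / T" using elim by (simp add: field_simps)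
    have b: "y1 - y2 * inverse T = (T * y1 - y2) / T" using elim by (simp add: field_simps)
    have c: "z1 - z2 * inverse T = (T * z1 - z2) / T" using elim by (simp add: field_simps)
    show ?case
    proof (cases "(T * y1 - y2) * (T * z1 - z2) = 0")
      case True
      thus ?thesis unfolding a b c by auto
    next
      case False
      hence nz: "T * y1 - y2 \<noteq> 0" "T * z1 - z2 \<noteq> 0" by auto
      have nz2: "(T * y1 - y2) / T * ((T * z1 - z2) / T) \<noteq> 0" using nz elim by simp
      show ?thesis unfolding a b c
        by (subst frac_eq_eq[OF nz2 False]) (use elim in \<open>simp add: field_simps\<close>)
    qed
  qed
  show ?thesis using tendsto_cong[OF ev] lim by simp
qed

lemma limsup_bound:
  fixes num dA dB :: "real \<Rightarrow> real" and x1 x2 y1 y2 z1 z2 D T0 :: real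
  assumes y1: "y1 > 0" and z1: "z1 > 0" and D: "D \<ge> 0" and x: "x1 \<ge> 0" "x2 \<ge> 0"
    and hn: "\<And>T. T \<ge> T0 \<Longrightarrow> 0 \<le> num T \<and> num T \<le> (T * x1 + x2) * D"
    and hA: "\<And>T. T \<ge> T0 \<Longrightarrow> dA T \<ge> T * y1 - y2"
    and hB: "\<And>T. T \<ge> T0 \<Longrightarrow> dB T \<ge> T * z1 - z2"
  shows "Limsup at_top (\<lambda>T. ereal ((num T / T) / ((dA T / T) * (dB T / T)))) \<le> ereal (x1 * D / (y1 * z1))"
proof -
  define U where "U T = T * (T * x1 + x2) * D / ((T * y1 - y2) * (T * z1 - z2))" for T
  have ev: "eventually (\<lambda>T. ereal ((num T / T) / ((dA T / T) * (dB T / T))) \<le> ereal (U T)) at_top"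
  proof -
    have "eventually (\<lambda>T. T \<ge> max T0 (max 1 (max (y2 / y1 + 1) (z2 / z1 + 1)))) at_top"
      by (rule eventually_ge_at_top)
    thus ?thesis
    proof eventually_elim
      case (elim T)
      have T: "T \<ge> T0" "T \<ge> 1" "T \<ge> y2 / y1 + 1" "T \<ge> z2 / z1 + 1" using elim by auto
      have Y: "T * y1 - y2 > 0"
      proof -
        have "T * y1 \<ge> (y2 / y1 + 1) * y1" using T(3) y1 by (intro mult_right_mono) auto
        moreover have "(y2 / y1 + 1) * y1 = y2 + y1" using y1 by (simp add: field_simps)
        ultimately show ?thesis using y1 by linarith
      qed
      have W: "T * z1 - z2 > 0"
      proof -
        have "T * z1 \<ge> (z2 / z1 + 1) * z1" using T(4) z1 by (intro mult_right_mono) auto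
        moreover have "(z2 / z1 + 1) * z1 = z2 + z1" using z1 by (simp add: field_simps)
        ultimately show ?thesis using z1 by linarith
      qed
      have A: "dA T \<ge> T * y1 - y2" and B: "dB T \<ge> T * z1 - z2" using hA hB T by auto
      have n: "0 \<le> num T" "num T \<le> (T * x1 + x2) * D" using hn T by auto
      have Tp: "T > 0" using T by simp
      have e: "(num T / T) / ((dA T / T) * (dB T / T)) = T * num T / (dA T * dB T)"
        using Tp by (simp add: field_simps)
      have "T * num T / (dA T * dB T) \<le> T * ((T * x1 + x2) * D) / ((T * y1 - y2) * (T * z1 - z2))"
      proof (rule frac_le)
        show "0 \<le> T * ((T * x1 + x2) * D)" using Tp x D by simp
        show "T * num T \<le> T * ((T * x1 + x2) * D)" using n Tp by simp
        show "0 < (T * y1 - y2) * (T * z1 - z2)" using Y W by simp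
        show "(T * y1 - y2) * (T * z1 - z2) \<le> dA T * dB T" using A B Y W by (intro mult_mono) auto
      qed
      thus ?case unfolding e U_def by (simp add: mult.assoc)
    qed
  qed
  have "Limsup at_top (\<lambda>T. ereal ((num T / T) / ((dA T / T) * (dB T / T)))) \<le> Limsup at_top (\<lambda>T. ereal (U T))"
    by (rule Limsup_mono[OF ev])
  also have "Limsup at_top (\<lambda>T. ereal (U T)) = ereal (x1 * D / (y1 * z1))"
  proof (rule lim_imp_Limsup)
    show "at_top \<noteq> (bot :: real filter)" by simp
    show "((\<lambda>T. ereal (U T)) \<longlongrightarrow> ereal (x1 * D / (y1 * z1))) at_top"
      unfolding lim_ereal U_def by (rule rat_lim[OF y1 z1])
  qed
  finally show ?thesis .
qed



lemma div_bounds: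
  fixes N L :: nat
  assumes L: "L > 0"
  shows "real N / real L - 1 \<le> real (N div L) \<and> real (N div L) \<le> real N / real L"
proof -
  have e: "real (N div L) * real L + real (N mod L) = real N"
    by (metis of_nat_add of_nat_mult div_mult_mod_eq)
  have m: "real (N mod L) < real L" using L by simp
  have A: "real (N div L) * real L \<ge> real N - real L" using e m by linarith
  have B: "real (N div L) * real L \<le> real N" using e by linarith
  have Lr: "real L > 0" using L by simp
  have "real N / real L - 1 = (real N - real L) / real L" using Lr by (simp add: field_simps)
  also have "\<dots> \<le> real (N div L)" using A Lr by (simp add: pos_divide_le_eq)
  finally have 1: "real N / real L - 1 \<le> real (N div L)" .
  have 2: "real (N div L) \<le> real N / real L" using B Lr by (simp add: pos_le_divide_eq)
  show ?thesis using 1 2 by simp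
qed

lemma finite_primes_le: "finite {p::nat. prime p \<and> real p \<le> x}"
  by (rule finite_subset[of _ "{..nat \<lfloor>x\<rfloor>}"]) (auto simp: le_nat_floor)

lemma card_coprime_residues:
  fixes S :: "nat set"
  assumes fin: "finite S" and pr: "\<forall>p\<in>S. prime p"
  shows "card {n. n < \<Prod>S \<and> (\<forall>p\<in>S. \<not> p dvd n)} = (\<Prod>p\<in>S. p - 1)"
proof -
  have "card {n. n < \<Prod>S \<and> (\<forall>p\<in>S. \<not> p dvd n)} = card {t. t < \<Prod>S \<and> (\<forall>p\<in>S. (\<lambda>p r. r \<noteq> 0) p (t mod p))}"
    by (simp add: dvd_eq_mod_eq_0)
  also have "\<dots> = (\<Prod>p\<in>S. card {r. r < p \<and> r \<noteq> 0})" by (rule crt_count[OF fin pr])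
  also have "\<dots> = (\<Prod>p\<in>S. p - 1)"
  proof (rule prod.cong[OF refl])
    fix p assume "p \<in> S"
    have "{r. r < p \<and> r \<noteq> 0} = {1..<p}" by auto
    thus "card {r. r < p \<and> r \<noteq> 0} = p - 1" by simp
  qed
  finally show ?thesis .
qed

lemma lower_dens:
  fixes \<gamma> T :: real
  assumes g: "\<gamma> \<ge> 2" and T: "T \<ge> 1"
  defines "S \<equiv> {p. prime p \<and> real p \<le> \<gamma>}"
  defines "Q \<equiv> real (\<Prod>S)" and "\<phi> \<equiv> (\<Prod>p\<in>S. real p - 1)"
  shows "measure lebesgue (Nset \<gamma> \<inter> {0..T}) \<ge> T * (\<phi> / (\<gamma> * Q)) - \<phi> * (1 / (2 * \<gamma> * Q) + 1 / Q + 1)"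
proof -
  define N1 where "N1 = nat \<lfloor>(T - 1/2) / \<gamma>\<rfloor>"
  define L where "L = \<Prod>S"
  define gg where "gg n = (\<forall>p\<in>S. \<not> p dvd n)" for n
  have fin: "finite S" unfolding S_def by (rule finite_primes_le)
  have pr: "\<forall>p\<in>S. prime p" unfolding S_def by auto
  have Lpos: "L > 0" unfolding L_def using pr by (intro prod_pos) (auto simp: prime_gt_0_nat)
  have two: "2 \<in> S" unfolding S_def using g by auto
  have gpos: "\<gamma> > 0" using g by simp
  have per: "gg (n + L) = gg n" for n
  proof -
    have "p dvd L" if "p \<in> S" for p unfolding L_def using dvd_prodI[OF fin that, of id] by simp
    thus ?thesis unfolding gg_def by (auto simp: dvd_add_left_iff)
  qed
  have g0: "\<not> gg 0" unfolding gg_def using two by auto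
  have phi: "real (card {n. n < L \<and> gg n}) = \<phi>"
  proof -
    have "card {n. n < L \<and> gg n} = (\<Prod>p\<in>S. p - 1)" unfolding L_def gg_def
      by (rule card_coprime_residues[OF fin pr])
    moreover have "real (\<Prod>p\<in>S. p - 1) = \<phi>" unfolding \<phi>_def of_nat_prod
    proof (intro prod.cong refl)
      fix x assume "x \<in> S"
      hence "x \<ge> 1" using pr prime_ge_1_nat by auto
      thus "real (x - 1) = real x - 1" by (simp add: of_nat_diff)
    qed
    ultimately show ?thesis by simp
  qed
  have phipos: "\<phi> \<ge> 0" unfolding \<phi>_def
  proof (intro prod_nonneg)
    fix x assume "x \<in> S"
    hence "x \<ge> 1" using pr prime_ge_1_nat by auto
    thus "0 \<le> real x - 1" by simp
  qed
  have QL: "Q = real L" unfolding Q_def L_def by simp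
  have N1T: "real N1 * \<gamma> + 1/2 \<le> T"
  proof -
    have "real N1 \<le> (T - 1/2) / \<gamma>" unfolding N1_def using T gpos by simp
    hence "real N1 * \<gamma> \<le> T - 1/2" using gpos by (simp add: field_simps)
    thus ?thesis by simp
  qed
  have N1ge: "real N1 \<ge> (T - 1/2) / \<gamma> - 1" unfolding N1_def using T gpos by linarith
  have sets_eq: "{n. 1 \<le> n \<and> n \<le> N1 \<and> n \<in> An \<gamma>} = {n. 1 \<le> n \<and> n \<le> N1 \<and> gg n}"
    unfolding An_def gg_def S_def by auto
  have "real (N1 div L) * \<phi> \<le> real (card {n. 1 \<le> n \<and> n \<le> N1 \<and> gg n})"
  proof -
    have "(N1 div L) * card {n. n < L \<and> gg n} \<le> card {n. 1 \<le> n \<and> n \<le> N1 \<and> gg n}"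
      by (rule periodic_count_ge[OF per Lpos g0])
    hence "real ((N1 div L) * card {n. n < L \<and> gg n}) \<le> real (card {n. 1 \<le> n \<and> n \<le> N1 \<and> gg n})"
      by (simp only: of_nat_le_iff)
    thus ?thesis using phi by simp
  qed
  also have "\<dots> \<le> measure lebesgue (Nset \<gamma> \<inter> {0..T})"
    using lower_meas[OF _ N1T] g sets_eq by simp
  finally have m: "real (N1 div L) * \<phi> \<le> measure lebesgue (Nset \<gamma> \<inter> {0..T})" .
  have "real (N1 div L) \<ge> ((T - 1/2) / \<gamma> - 1) / real L - 1"
  proof -
    have "real (N1 div L) \<ge> real N1 / real L - 1" using div_bounds[OF Lpos, of N1] by simp
    moreover have "real N1 / real L \<ge> ((T - 1/2) / \<gamma> - 1) / real L"
      using N1ge Lpos by (intro divide_right_mono) auto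
    ultimately show ?thesis by linarith
  qed
  hence "real (N1 div L) * \<phi> \<ge> (((T - 1/2) / \<gamma> - 1) / real L - 1) * \<phi>"
    using phipos by (intro mult_right_mono) auto
  moreover have "(((T - 1/2) / \<gamma> - 1) / real L - 1) * \<phi> = T * (\<phi> / (\<gamma> * Q)) - \<phi> * (1 / (2 * \<gamma> * Q) + 1 / Q + 1)"
    unfolding QL using gpos Lpos by (simp add: field_simps)
  ultimately show ?thesis using m by linarith
qed



lemma instance_bound:
  fixes \<alpha> \<beta> :: real and a q :: nat
  assumes b2: "\<beta> \<ge> 2" and ab: "\<beta> < \<alpha>" and a: "a > 0" and q: "q > 0" and cop: "coprime a q"
    and al: "\<alpha> = real a * \<beta> / real q"
  shows "Limsup at_top (\<lambda>T. ereal (PT T (Nset \<alpha> \<inter> Nset \<beta>) / (PT T (Nset \<alpha>) * PT T (Nset \<beta>))))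
     \<le> ereal (1 + \<beta> * \<beta> * 3 ^ card {p \<in> {p. prime p \<and> real p \<le> \<alpha>}. badp (p \<in> {p. prime p \<and> real p \<le> \<beta>}) p a q} / real q)"
proof -
  define Pr where "Pr = {p. prime p \<and> real p \<le> \<alpha>}"
  define Ps where "Ps = {p. prime p \<and> real p \<le> \<beta>}"
  define Bad where "Bad = {p \<in> Pr. badp (p \<in> Ps) p a q}"
  define P where "P = \<Prod>Pr"
  define M where "M = \<Prod>Ps"
  define \<phi>P where "\<phi>P = (\<Prod>p\<in>Pr. real p - 1)"
  define \<phi>M where "\<phi>M = (\<Prod>p\<in>Ps. real p - 1)"
  define H where "H = real q / \<beta>"
  define Z where "Z = {-\<lceil>H\<rceil>..\<lceil>H\<rceil>}"
  define uP where "uP p = uu (p \<in> Ps) p a q" for p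
  define vP where "vP p = vv (p \<in> Ps) p a q" for p
  define Ab where "Ab = (\<Prod>p\<in>Pr. \<bar>uP p\<bar> + \<bar>vP p\<bar>)"
  define mp where "mp = (\<Prod>p\<in>Pr. uP p + vP p / real p)"
  define Dh where "Dh h = real (card {n. n < q * P \<and> goodn Pr Ps a q h n})" for h
  define Db where "Db = real P * (H * mp + Ab)"
  have finPr: "finite Pr" unfolding Pr_def by (rule finite_primes_le)
  have finPs: "finite Ps" unfolding Ps_def by (rule finite_primes_le)
  have prPr: "\<forall>p\<in>Pr. prime p" unfolding Pr_def by auto
  have PsPr: "Ps \<subseteq> Pr" unfolding Ps_def Pr_def using ab by auto
  have p2: "p \<ge> 2" if "p \<in> Pr" for p using prPr that prime_ge_2_nat by auto
  have p3: "p \<ge> 3" if "p \<in> Pr" "p \<notin> Ps" for p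
  proof -
    have "real p > \<beta>" using that unfolding Ps_def Pr_def by auto
    hence "real p > 2" using b2 by linarith
    thus ?thesis by simp
  qed
  have alpos: "\<alpha> > 0" and bpos: "\<beta> > 0" using ab b2 by auto
  have Hpos: "H > 0" unfolding H_def using q bpos by simp
  have Ppos: "P > 0" unfolding P_def using prPr by (intro prod_pos) (auto simp: prime_gt_0_nat)
  have Mpos: "M > 0" unfolding M_def using prPr PsPr by (intro prod_pos) (auto simp: prime_gt_0_nat)
  have \<phi>Ppos: "\<phi>P > 0" unfolding \<phi>P_def
  proof (intro prod_pos)
    fix x assume "x \<in> Pr" hence "x \<ge> 2" using p2 by auto
    thus "0 < real x - 1" by simp
  qed
  have \<phi>Mpos: "\<phi>M > 0" unfolding \<phi>M_def
  proof (intro prod_pos)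
    fix x assume "x \<in> Ps" hence "x \<ge> 2" using p2 PsPr by auto
    thus "0 < real x - 1" by simp
  qed
  have mp_eq: "mp = (\<phi>P / real P) * (\<phi>M / real M)"
  proof -
    have "mp = (\<Prod>p\<in>Pr. ((real p - 1) / p) * (if p \<in> Ps then (real p - 1) / p else 1))"
      unfolding mp_def uP_def vP_def using p2 by (intro prod.cong refl uv_mean) auto
    also have "\<dots> = (\<Prod>p\<in>Pr. (real p - 1) / p) * (\<Prod>p\<in>Pr. (if p \<in> Ps then (real p - 1) / p else 1))"
      by (rule prod.distrib)
    also have "(\<Prod>p\<in>Pr. (if p \<in> Ps then (real p - 1) / p else 1)) = (\<Prod>p\<in>{p \<in> Pr. p \<in> Ps}. (real p - 1) / p)"
      by (rule prod.inter_filter[OF finPr, symmetric])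
    also have "{p \<in> Pr. p \<in> Ps} = Ps" using PsPr by auto
    finally show ?thesis unfolding \<phi>P_def \<phi>M_def P_def M_def by (simp add: prod_dividef)
  qed
  have mppos: "mp > 0" unfolding mp_eq using \<phi>Ppos \<phi>Mpos Ppos Mpos by simp
  have Ab_le: "Ab \<le> mp * (\<beta> * 3 ^ card Bad)"
  proof -
    define g where "g p = (if p \<in> Ps then real p / (real p - 1) else 1) * (if badp (p \<in> Ps) p a q then 3 else 1)" for p
    have "Ab \<le> (\<Prod>p\<in>Pr. (uP p + vP p / real p) * g p)"
      unfolding Ab_def
    proof (rule prod_mono)
      fix p assume pP: "p \<in> Pr"
      have "\<bar>uP p\<bar> + \<bar>vP p\<bar> \<le> (((real p - 1) / p) * (if p \<in> Ps then (real p - 1) / p else 1)) * g p"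
        unfolding uP_def vP_def g_def by (rule uv_abs) (use p2 p3 pP in auto)
      also have "\<dots> = (uP p + vP p / real p) * g p" unfolding uP_def vP_def using uv_mean p2 pP by simp
      finally show "0 \<le> \<bar>uP p\<bar> + \<bar>vP p\<bar> \<and> \<bar>uP p\<bar> + \<bar>vP p\<bar> \<le> (uP p + vP p / real p) * g p" by simp
    qed
    also have "\<dots> = mp * (\<Prod>p\<in>Pr. g p)" unfolding mp_def by (rule prod.distrib)
    also have "(\<Prod>p\<in>Pr. g p) = (\<Prod>p\<in>Ps. real p / (real p - 1)) * 3 ^ card Bad"
    proof -
      have "(\<Prod>p\<in>Pr. g p) = (\<Prod>p\<in>Pr. (if p \<in> Ps then real p / (real p - 1) else 1)) * (\<Prod>p\<in>Pr. (if badp (p \<in> Ps) p a q then 3 else 1))"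
        unfolding g_def by (rule prod.distrib)
      also have "(\<Prod>p\<in>Pr. (if p \<in> Ps then real p / (real p - 1) else 1)) = (\<Prod>p\<in>{p \<in> Pr. p \<in> Ps}. real p / (real p - 1))"
        by (rule prod.inter_filter[OF finPr, symmetric])
      also have "{p \<in> Pr. p \<in> Ps} = Ps" using PsPr by auto
      also have "(\<Prod>p\<in>Pr. (if badp (p \<in> Ps) p a q then 3 else 1)) = (\<Prod>p\<in>Bad. (3::real))"
        unfolding Bad_def by (rule prod.inter_filter[OF finPr, symmetric])
      also have "\<dots> = 3 ^ card Bad" by simp
      finally show ?thesis .
    qed
    also have "mp * ((\<Prod>p\<in>Ps. real p / (real p - 1)) * 3 ^ card Bad) \<le> mp * (\<beta> * 3 ^ card Bad)"
    proof -
      have "(\<Prod>p\<in>Ps. real p / (real p - 1)) \<le> \<beta>" unfolding Ps_def by (rule mertens_crude) (use b2 in auto)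
      thus ?thesis using mppos by (intro mult_left_mono) auto
    qed
    finally show ?thesis .
  qed
  have Dh_le: "Dh h \<le> real P * (\<Prod>p\<in>Pr. uP p + vP p * (if int p dvd h then 1 else 0))" for h
  proof -
    have "Dh h \<le> (\<Prod>p\<in>Pr. real p * (uP p + vP p * (if int p dvd h then 1 else 0)))"
      unfolding Dh_def P_def uP_def vP_def by (rule count_goodn[OF q cop finPr prPr PsPr])
    also have "\<dots> = real P * (\<Prod>p\<in>Pr. uP p + vP p * (if int p dvd h then 1 else 0))"
      unfolding P_def by (simp add: prod.distrib)
    finally show ?thesis .
  qed
  have trinn: "tri H h \<ge> 0" for h unfolding tri_def by simp
  have Dsum: "(\<Sum>h\<in>Z. tri H h * Dh h) \<le> Db"
  proof -
    have "(\<Sum>h\<in>Z. tri H h * Dh h) \<le> (\<Sum>h\<in>Z. tri H h * (real P * (\<Prod>p\<in>Pr. uP p + vP p * (if int p dvd h then 1 else 0))))"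
      by (intro sum_mono mult_left_mono Dh_le trinn)
    also have "\<dots> = real P * (\<Sum>h\<in>Z. tri H h * (\<Prod>p\<in>Pr. uP p + vP p * (if int p dvd h then 1 else 0)))"
      by (simp add: sum_distrib_left mult.left_commute)
    also have "\<dots> \<le> real P * (H * mp + Ab)"
    proof (rule mult_left_mono)
      have sub: "{j. \<bar>real_of_int j\<bar> < H} \<subseteq> Z"
      proof
        fix j assume "j \<in> {j. \<bar>real_of_int j\<bar> < H}"
        hence "real_of_int \<bar>j\<bar> < H" by simp
        hence "real_of_int \<bar>j\<bar> \<le> real_of_int \<lceil>H\<rceil>" using ceiling_correct[of H] by linarith
        hence "\<bar>j\<bar> \<le> \<lceil>H\<rceil>" by (simp only: of_int_le_iff)
        thus "j \<in> Z" unfolding Z_def by (auto simp: abs_le_iff)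
      qed
      show "(\<Sum>h\<in>Z. tri H h * (\<Prod>p\<in>Pr. uP p + vP p * (if int p dvd h then 1 else 0))) \<le> H * mp + Ab"
        unfolding mp_def Ab_def by (rule sieve_bound[OF finPr prPr Hpos _ sub]) (simp add: Z_def)
    qed simp
    finally show ?thesis unfolding Db_def .
  qed
  have Dbnn: "Db \<ge> 0"
  proof -
    have "0 \<le> (\<Sum>h\<in>Z. tri H h * Dh h)" unfolding Dh_def using trinn by (intro sum_nonneg) auto
    thus ?thesis using Dsum by linarith
  qed
  define x1 where "x1 = 1 / (\<alpha> * real q * real P)"
  define x2 where "x2 = 1 / (\<alpha> * real q * real P) + 1"
  have num: "0 \<le> measure lebesgue (Nset \<alpha> \<inter> Nset \<beta> \<inter> {0..T}) \<and>
             measure lebesgue (Nset \<alpha> \<inter> Nset \<beta> \<inter> {0..T}) \<le> (T * x1 + x2) * Db" if T: "T \<ge> 1" for T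
  proof -
    define N where "N = nat \<lfloor>(T + 1) / \<alpha>\<rfloor>"
    define L where "L = q * P"
    have Lpos: "L > 0" unfolding L_def using q Ppos by simp
    have NL: "real (N div L) \<le> (T + 1) / (\<alpha> * real q * real P)"
    proof -
      have "real (N div L) \<le> real N / real L" using div_bounds[OF Lpos] by simp
      also have "real N \<le> (T + 1) / \<alpha>" unfolding N_def using T alpos by simp
      hence "real N / real L \<le> ((T + 1) / \<alpha>) / real L" using Lpos by (intro divide_right_mono) auto
      also have "((T + 1) / \<alpha>) / real L = (T + 1) / (\<alpha> * real q * real P)" unfolding L_def by (simp add: field_simps)
      finally show ?thesis .
    qed
    have cnt: "real (card {n. 1 \<le> n \<and> n \<le> N \<and> goodn Pr Ps a q h n}) \<le> (T * x1 + x2) * Dh h" for h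
    proof -
      have "card {n. 1 \<le> n \<and> n \<le> N \<and> goodn Pr Ps a q h n} \<le> (N div L + 1) * card {n. n < L \<and> goodn Pr Ps a q h n}"
        by (rule periodic_count_le[OF _ Lpos]) (unfold L_def P_def, rule goodn_periodic[OF finPr PsPr q])
      hence "real (card {n. 1 \<le> n \<and> n \<le> N \<and> goodn Pr Ps a q h n}) \<le> (real (N div L) + 1) * Dh h"
        unfolding Dh_def L_def by (metis of_nat_1 of_nat_add of_nat_le_iff of_nat_mult)
      also have "\<dots> \<le> (T * x1 + x2) * Dh h"
      proof (rule mult_right_mono)
        show "real (N div L) + 1 \<le> T * x1 + x2" using NL unfolding x1_def x2_def by (simp add: add_divide_distrib)
      qed (simp add: Dh_def)
      finally show ?thesis .
    qed
    have "measure lebesgue (Nset \<alpha> \<inter> Nset \<beta> \<inter> {0..T})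
      \<le> (\<Sum>h\<in>Z. tri H h * real (card {n. 1 \<le> n \<and> n \<le> N \<and> goodn Pr Ps a q h n}))"
      unfolding Z_def H_def N_def Pr_def Ps_def using upper_meas[OF bpos a q al] ab by simp
    also have "\<dots> \<le> (\<Sum>h\<in>Z. tri H h * ((T * x1 + x2) * Dh h))"
      by (intro sum_mono mult_left_mono cnt trinn)
    also have "\<dots> = (T * x1 + x2) * (\<Sum>h\<in>Z. tri H h * Dh h)" by (simp add: sum_distrib_left mult.left_commute)
    also have "\<dots> \<le> (T * x1 + x2) * Db"
    proof (rule mult_left_mono[OF Dsum])
      show "0 \<le> T * x1 + x2" unfolding x1_def x2_def using T alpos q Ppos by simp
    qed
    finally show ?thesis by simp
  qed
  define y1 where "y1 = \<phi>P / (\<alpha> * real P)"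
  define y2 where "y2 = \<phi>P * (1 / (2 * \<alpha> * real P) + 1 / real P + 1)"
  define z1 where "z1 = \<phi>M / (\<beta> * real M)"
  define z2 where "z2 = \<phi>M * (1 / (2 * \<beta> * real M) + 1 / real M + 1)"
  have dA: "measure lebesgue (Nset \<alpha> \<inter> {0..T}) \<ge> T * y1 - y2" if "T \<ge> 1" for T
    unfolding y1_def y2_def \<phi>P_def P_def Pr_def using lower_dens[OF _ that, of \<alpha>] ab b2 by simp
  have dB: "measure lebesgue (Nset \<beta> \<inter> {0..T}) \<ge> T * z1 - z2" if "T \<ge> 1" for T
    unfolding z1_def z2_def \<phi>M_def M_def Ps_def using lower_dens[OF b2 that] by simp
  have y1pos: "y1 > 0" unfolding y1_def using \<phi>Ppos alpos Ppos by simp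
  have z1pos: "z1 > 0" unfolding z1_def using \<phi>Mpos bpos Mpos by simp
  have lim: "Limsup at_top (\<lambda>T. ereal ((measure lebesgue (Nset \<alpha> \<inter> Nset \<beta> \<inter> {0..T}) / T) /
        ((measure lebesgue (Nset \<alpha> \<inter> {0..T}) / T) * (measure lebesgue (Nset \<beta> \<inter> {0..T}) / T))))
      \<le> ereal (x1 * Db / (y1 * z1))"
    by (rule limsup_bound[OF y1pos z1pos Dbnn _ _ num dA dB])
       (use alpos q Ppos in \<open>auto simp: x1_def x2_def\<close>)
  have val: "x1 * Db / (y1 * z1) = 1 + (\<beta> / real q) * (Ab / mp)"
  proof -
    have "x1 * Db / (y1 * z1) = (H * mp + Ab) * (real P * \<beta> * real M) / (real q * \<phi>P * \<phi>M)"
      unfolding x1_def Db_def y1_def z1_def using alpos bpos q Ppos Mpos \<phi>Ppos \<phi>Mpos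
      by (simp add: field_simps)
    also have "\<dots> = (H * mp + Ab) * \<beta> / real q * (real P * real M / (\<phi>P * \<phi>M))"
      by (simp add: field_simps)
    also have "real P * real M / (\<phi>P * \<phi>M) = 1 / mp" unfolding mp_eq using Ppos Mpos \<phi>Ppos \<phi>Mpos
      by (simp add: field_simps)
    also have "(H * mp + Ab) * \<beta> / real q * (1 / mp) = (H * mp + Ab) * \<beta> / (real q * mp)"
      by simp
    also have "\<dots> = 1 + (\<beta> / real q) * (Ab / mp)"
      unfolding H_def using mppos bpos q by (simp add: field_simps)
    finally show ?thesis .
  qed
  have "(\<beta> / real q) * (Ab / mp) \<le> (\<beta> / real q) * (\<beta> * 3 ^ card Bad)"
  proof (rule mult_left_mono)
    show "Ab / mp \<le> \<beta> * 3 ^ card Bad" using Ab_le mppos by (simp add: divide_le_eq mult.commute)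
  qed (use bpos q in auto)
  hence fin: "x1 * Db / (y1 * z1) \<le> 1 + \<beta> * \<beta> * 3 ^ card Bad / real q" unfolding val by simp
  have "Limsup at_top (\<lambda>T. ereal (PT T (Nset \<alpha> \<inter> Nset \<beta>) / (PT T (Nset \<alpha>) * PT T (Nset \<beta>))))
      \<le> ereal (x1 * Db / (y1 * z1))" using lim unfolding PT_def .
  also have "\<dots> \<le> ereal (1 + \<beta> * \<beta> * 3 ^ card Bad / real q)" using fin by simp
  finally show ?thesis unfolding Bad_def Pr_def Ps_def .
qed



lemma caseB_arith:
  fixes \<alpha> \<beta> a q X C :: real
  assumes b: "\<beta> > 0" and ab: "\<beta> \<le> \<alpha>" and q: "q > 0" and a: "a = \<alpha> * q / \<beta>"
    and qb: "\<beta> * \<alpha>^2 \<le> q" and X: "X \<ge> 0" and X6: "X^6 \<le> C * a * q" and C: "C \<ge> 1"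
  shows "\<beta> * \<beta> * X / q \<le> C * \<beta> / \<alpha>"
proof (rule ccontr)
  assume "\<not> ?thesis"
  hence lt: "C * \<beta> / \<alpha> < \<beta> * \<beta> * X / q" by simp
  have al: "\<alpha> > 0" using b ab by simp
  define Y where "Y = C * q / (\<beta> * \<alpha>)"
  have Y0: "Y \<ge> 0" unfolding Y_def using C q b al by simp
  have "C * \<beta> / \<alpha> * (q / (\<beta> * \<beta>)) < \<beta> * \<beta> * X / q * (q / (\<beta> * \<beta>))"
    using lt b q by (intro mult_strict_right_mono) auto
  hence YX: "Y < X" unfolding Y_def using b q al by (simp add: field_simps)
  hence Y6: "Y^6 < X^6" using Y0 by (intro power_strict_mono) auto
  have A1: "\<alpha>^7 * \<beta>^5 \<le> q^4"
  proof -
    have "(\<beta> * \<alpha>^2)^4 \<le> q^4" using qb b al by (intro power_mono) auto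
    hence "\<beta>^4 * \<alpha>^8 \<le> q^4" by (simp add: power_mult_distrib power_mult[symmetric])
    moreover have "\<alpha>^7 * \<beta>^5 \<le> \<beta>^4 * \<alpha>^8"
    proof -
      have "(\<beta>^4 * \<alpha>^7) * \<beta> \<le> (\<beta>^4 * \<alpha>^7) * \<alpha>" using ab b al by (intro mult_left_mono) auto
      thus ?thesis by (simp add: algebra_simps power_Suc[symmetric] power_add[symmetric] eval_nat_numeral)
    qed
    ultimately show ?thesis by linarith
  qed
  have C6: "C \<le> C^6" using C by (simp add: power_increasing[of 1 6 C, simplified])
  have A2: "C * (\<alpha>^7 * \<beta>^5) * q^2 \<le> C^6 * q^4 * q^2"
    using A1 C6 C q al b by (intro mult_right_mono mult_mono) auto
  have p7: "\<alpha>^7 = \<alpha> * \<alpha>^6" using power_add[of \<alpha> 1 6] by simp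
  have p6: "\<beta>^6 = \<beta> * \<beta>^5" using power_add[of \<beta> 1 5] by simp
  have nz: "\<alpha>^6 \<noteq> 0" "\<beta>^5 \<noteq> 0" using al b by auto
  have "C * a * q = (C * (\<alpha>^7 * \<beta>^5) * q^2) / (\<beta>^6 * \<alpha>^6)"
    unfolding a p7 p6 using b al nz by (simp add: field_simps power2_eq_square)
  also have "\<dots> \<le> (C^6 * q^4 * q^2) / (\<beta>^6 * \<alpha>^6)"
    using A2 b al by (intro divide_right_mono) auto
  also have "\<dots> = Y^6"
  proof -
    have "q^4 * q^2 = q^6" by (simp add: power_add[symmetric])
    hence "C^6 * q^4 * q^2 = (C * q)^6" by (simp add: power_mult_distrib mult.assoc)
    moreover have "\<beta>^6 * \<alpha>^6 = (\<beta> * \<alpha>)^6" by (simp add: power_mult_distrib)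
    ultimately show ?thesis unfolding Y_def by (simp add: power_divide)
  qed
  finally show False using Y6 X6 by linarith
qed

lemma caseA_arith:
  fixes \<beta> q s t X KA CA :: real
  assumes b: "\<beta> \<ge> 2" and qb: "\<beta> * 10 powr \<beta> \<le> q" and X: "0 \<le> X" "X \<le> s * t"
    and st: "s \<ge> 0" "t \<ge> 0" and s2: "s^2 \<le> 9 powr \<beta>" and t2: "t^2 \<le> 9^9 * q"
    and KA: "\<beta>^5 * (9/10) powr \<beta> \<le> KA" and CA: "CA = 9^9 * KA + 1"
  shows "\<beta> * \<beta> * X / q \<le> CA / \<beta>"
proof -
  have bp: "\<beta> > 0" using b by simp
  have p10: "10 powr \<beta> > 0" by simp
  have "\<beta> * 10 powr \<beta> > 0" using bp p10 by simp
  hence qp: "q > 0" using qb by linarith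
  define W where "W = \<beta>^3 * X / q"
  have W0: "W \<ge> 0" unfolding W_def using X bp qp by simp
  have X2: "X^2 \<le> s^2 * t^2"
  proof -
    have "X^2 \<le> (s * t)^2" using X by (intro power_mono) auto
    thus ?thesis by (simp add: power_mult_distrib)
  qed
  also have "\<dots> \<le> 9 powr \<beta> * (9^9 * q)" using s2 t2 by (intro mult_mono) auto
  finally have X2': "X^2 \<le> 9 powr \<beta> * (9^9 * q)" .
  have "W^2 = \<beta>^6 * X^2 / q^2" unfolding W_def by (simp add: power_mult_distrib power_divide power_mult[symmetric])
  also have "\<dots> \<le> \<beta>^6 * (9 powr \<beta> * (9^9 * q)) / q^2"
    using X2' bp qp by (intro divide_right_mono mult_left_mono) auto
  also have "\<dots> = 9^9 * (\<beta>^6 * 9 powr \<beta>) / q" using qp by (simp add: field_simps power2_eq_square)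
  also have "\<dots> \<le> 9^9 * (\<beta>^6 * 9 powr \<beta>) / (\<beta> * 10 powr \<beta>)"
    using qb bp p10 qp by (intro divide_left_mono) auto
  also have "\<dots> = 9^9 * (\<beta>^5 * (9/10) powr \<beta>)"
    using bp by (simp add: powr_divide field_simps eval_nat_numeral)
  also have "\<dots> \<le> 9^9 * KA" using KA by simp
  finally have W2: "W^2 \<le> 9^9 * KA" .
  have "0 \<le> \<beta>^5 * (9/10) powr \<beta>" using bp by simp
  hence KA0: "KA \<ge> 0" using KA by linarith
  have "W \<le> CA"
  proof (rule ccontr)
    assume "\<not> W \<le> CA"
    hence "CA < W" by simp
    hence "CA^2 < W^2" using CA KA0 by (intro power_strict_mono) auto
    moreover have "CA \<le> CA^2" using CA KA0 by (simp add: power2_eq_square)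
    ultimately show False using W2 CA by linarith
  qed
  hence "W / \<beta> \<le> CA / \<beta>" using bp by (intro divide_right_mono) auto
  moreover have "W / \<beta> = \<beta> * \<beta> * X / q" unfolding W_def power3_eq_cube using bp by (simp add: field_simps)
  ultimately show ?thesis by simp
qed

lemma height_extract:
  fixes \<alpha> \<beta> :: real
  assumes b: "\<beta> > 0" and ab: "\<alpha> > \<beta>" and Q: "\<alpha> / \<beta> \<in> \<rat>"
    and br: "bracket \<alpha> \<beta> \<ge> ereal (min (\<alpha>^2) (10 powr \<beta>))"
  shows "\<exists>a q::nat. a > 0 \<and> q > 0 \<and> coprime a q \<and> \<alpha> = real a * \<beta> / real q
      \<and> \<beta> * min (\<alpha>^2) (10 powr \<beta>) \<le> real q"
proof -
  obtain r where r: "\<alpha> / \<beta> = of_rat r" using Q by (auto elim: Rats_cases)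
  have the: "(THE r'::rat. of_rat r' = \<alpha> / \<beta>) = r"
    by (rule the_equality) (auto simp: r)
  obtain A D where qd: "quotient_of r = (A, D)" by (cases "quotient_of r")
  have D: "D > 0" using quotient_of_denom_pos[OF qd] .
  have copAD: "coprime A D" using quotient_of_coprime[OF qd] .
  have rAD: "r = of_int A / of_int D" using quotient_of_div[OF qd] .
  have abAD: "\<alpha> / \<beta> = real_of_int A / real_of_int D" unfolding r rAD by (simp add: of_rat_divide)
  have al: "\<alpha> > 0" using b ab by simp
  have gt1: "\<alpha> / \<beta> > 1" using ab b by simp
  hence "real_of_int A > real_of_int D" using D unfolding abAD by (simp add: field_simps)
  hence AD: "A > D" by simp
  have A0: "A > 0" using AD D by simp
  have alA: "\<alpha> = real_of_int A * \<beta> / real_of_int D" using abAD b D by (simp add: field_simps)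
  have hgt: "height (\<alpha> / \<beta>) = ereal (real_of_int A)"
    unfolding height_def using Q the qd AD by simp
  have e: "bracket \<alpha> \<beta> = ereal (real_of_int A / \<alpha>)"
    unfolding bracket_def hgt using ab al by simp
  have "ereal (min (\<alpha>^2) (10 powr \<beta>)) \<le> ereal (real_of_int A / \<alpha>)" using br unfolding e .
  hence "min (\<alpha>^2) (10 powr \<beta>) \<le> real_of_int A / \<alpha>" by (metis ereal_less_eq(3))
  also have "real_of_int A / \<alpha> = real_of_int D / \<beta>" unfolding alA using A0 D b by (simp add: field_simps)
  finally have mD: "min (\<alpha>^2) (10 powr \<beta>) \<le> real_of_int D / \<beta>" .
  hence "\<beta> * min (\<alpha>^2) (10 powr \<beta>) \<le> real_of_int D" using b by (simp add: field_simps)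
  moreover have "coprime (nat A) (nat D)" using copAD A0 D
    by (metis coprime_int_iff int_nat_eq less_imp_le)
  ultimately show ?thesis using A0 D alA
    by (intro exI[of _ "nat A"] exI[of _ "nat D"]) auto
qed



lemma pow39: "((3::real) ^ k) ^ 2 = 9 ^ k"
proof -
  have "((3::real) ^ k) ^ 2 = (3 ^ 2) ^ k" by (metis power_mult mult.commute)
  thus ?thesis by simp
qed

theorem lemma2p9:
  "\<exists>c::real. c > 0 \<and>
     (\<forall>\<alpha> \<beta> :: real. \<alpha> > \<beta> \<longrightarrow> \<beta> \<ge> 2 \<longrightarrow>
        \<alpha> / \<beta> \<in> \<rat> \<longrightarrow> \<alpha> / \<beta> \<notin> \<nat> \<longrightarrow>
        bracket \<alpha> \<beta> \<ge> ereal (min (\<alpha>^2) (10 powr \<beta>)) \<longrightarrow>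
        Limsup at_top (\<lambda>T. ereal (PT T (Nset \<alpha> \<inter> Nset \<beta>) /
                                   (PT T (Nset \<alpha>) * PT T (Nset \<beta>))))
          \<le> ereal (1 + c * (ln (2 * \<beta>) / (\<alpha> / \<beta>) + 1 / \<beta>)))"
proof -
  obtain KA :: real where KA: "\<forall>x::real\<ge>0. x ^ 5 * (9/10) powr x \<le> KA"
    using poly_exp_bound[of "9/10" 5] by auto
  have KA0: "KA \<ge> 0" using KA[rule_format, of 0] by simp
  define CA :: real where "CA = 9^9 * KA + 1"
  obtain K6 :: nat where K6: "K6 = 729" by blast
  define CB :: real where "CB = real K6 ^ K6"
  define c where "c = max CA CB"
  have CA1: "CA \<ge> 1" unfolding CA_def using KA0 by simp
  have CB1: "CB \<ge> 1" unfolding CB_def by (rule one_le_power) (simp add: K6)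
  have cpos: "c > 0" unfolding c_def using CA1 by simp
  show ?thesis
  proof (intro exI[of _ c] conjI allI impI)
    show "c > 0" by (rule cpos)
  next
    fix \<alpha> \<beta> :: real
    assume ab: "\<alpha> > \<beta>" and b2: "\<beta> \<ge> 2" and Q: "\<alpha> / \<beta> \<in> \<rat>" and "\<alpha> / \<beta> \<notin> \<nat>"
      and br: "bracket \<alpha> \<beta> \<ge> ereal (min (\<alpha>^2) (10 powr \<beta>))"
    have bpos: "\<beta> > 0" using b2 by simp
    have alpos: "\<alpha> > 0" using ab bpos by simp
    obtain a q :: nat where a: "a > 0" and q: "q > 0" and cop: "coprime a q"
      and al: "\<alpha> = real a * \<beta> / real q" and qb: "\<beta> * min (\<alpha>^2) (10 powr \<beta>) \<le> real q"
      using height_extract[OF bpos ab Q br] by blast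
    define Pr where "Pr = {p. prime p \<and> real p \<le> \<alpha>}"
    define Ps where "Ps = {p. prime p \<and> real p \<le> \<beta>}"
    define Bad where "Bad = {p \<in> Pr. badp (p \<in> Ps) p a q}"
    define X :: real where "X = 3 ^ card Bad"
    have ib: "Limsup at_top (\<lambda>T. ereal (PT T (Nset \<alpha> \<inter> Nset \<beta>) / (PT T (Nset \<alpha>) * PT T (Nset \<beta>))))
       \<le> ereal (1 + \<beta> * \<beta> * X / real q)"
      using instance_bound[OF b2 ab a q cop al] unfolding X_def Bad_def Pr_def Ps_def .
    have finPr: "finite Pr" unfolding Pr_def by (rule finite_primes_le)
    have finPs: "finite Ps" unfolding Ps_def by (rule finite_primes_le)
    have X0: "X \<ge> 0" unfolding X_def by simp
    have ln1: "ln (2 * \<beta>) \<ge> 1"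
    proof -
      have "exp 1 \<le> 2 * \<beta>" using exp_le b2 by linarith
      hence "ln (exp 1) \<le> ln (2 * \<beta>)" using bpos by (subst ln_le_cancel_iff) auto
      thus ?thesis by simp
    qed
    have lnterm: "ln (2 * \<beta>) / (\<alpha> / \<beta>) \<ge> \<beta> / \<alpha>"
    proof -
      have "ln (2 * \<beta>) / (\<alpha> / \<beta>) = ln (2 * \<beta>) * (\<beta> / \<alpha>)" by simp
      moreover have "ln (2 * \<beta>) * (\<beta> / \<alpha>) \<ge> 1 * (\<beta> / \<alpha>)"
        using ln1 bpos alpos by (intro mult_right_mono) auto
      ultimately show ?thesis by simp
    qed
    have bnd: "\<beta> * \<beta> * X / real q \<le> c * (ln (2 * \<beta>) / (\<alpha> / \<beta>) + 1 / \<beta>)"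
    proof (cases "\<alpha>^2 \<le> 10 powr \<beta>")
      case True
      have qB: "\<beta> * \<alpha>^2 \<le> real q" using qb True by (simp add: min_def)
      have sub: "Bad \<subseteq> prime_factors (a * q)"
      proof
        fix p assume "p \<in> Bad"
        hence "p \<in> Pr" "badp (p \<in> Ps) p a q" unfolding Bad_def by auto
        hence "prime p" "p dvd a \<or> p dvd q" unfolding Pr_def badp_def by (auto split: if_splits)
        hence "p dvd a * q" by auto
        thus "p \<in> prime_factors (a * q)" using \<open>prime p\<close> a q by (auto simp: in_prime_factors_iff)
      qed
      have cB: "card Bad \<le> card (prime_factors (a * q))" by (rule card_mono[OF _ sub]) simp
      have K6p: "K6 \<ge> 1" using K6 by simp
      have "K6 ^ card Bad \<le> K6 ^ card (prime_factors (a * q))"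
        using cB K6p by (intro power_increasing) auto
      also have "\<dots> \<le> K6 ^ K6 * (a * q)" using a q K6p by (intro omega_bound) auto
      finally have "real (K6 ^ card Bad) \<le> real (K6 ^ K6 * (a * q))" by (simp only: of_nat_le_iff)
      hence le1: "real K6 ^ card Bad \<le> CB * real a * real q" unfolding CB_def by (simp add: mult.assoc)
      have "X^6 = (3^6) ^ card Bad" unfolding X_def by (metis power_mult mult.commute)
      also have "(3::real)^6 = real K6" using K6 by simp
      finally have "X^6 = real K6 ^ card Bad" .
      hence X6: "X^6 \<le> CB * real a * real q" using le1 by simp
      have aeq: "real a = \<alpha> * real q / \<beta>" using al bpos q by (simp add: field_simps)
      have "\<beta> * \<beta> * X / real q \<le> CB * \<beta> / \<alpha>"
        by (rule caseB_arith[OF bpos _ _ aeq qB X0 X6 CB1]) (use ab q in auto)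
      also have "\<dots> \<le> c * (\<beta> / \<alpha>)" unfolding c_def using bpos alpos by (simp add: divide_right_mono)
      also have "\<dots> \<le> c * (ln (2 * \<beta>) / (\<alpha> / \<beta>) + 1 / \<beta>)"
      proof (rule mult_left_mono)
        have "0 < 1 / \<beta>" using bpos by simp
        thus "\<beta> / \<alpha> \<le> ln (2 * \<beta>) / (\<alpha> / \<beta>) + 1 / \<beta>" using lnterm by linarith
      qed (use cpos in simp)
      finally show ?thesis .
    next
      case False
      have qA: "\<beta> * 10 powr \<beta> \<le> real q" using qb False by (simp add: min_def)
      have sub: "Bad \<subseteq> Ps \<union> prime_factors q"
      proof
        fix p assume "p \<in> Bad"
        hence "p \<in> Pr" "badp (p \<in> Ps) p a q" unfolding Bad_def by auto
        thus "p \<in> Ps \<union> prime_factors q" unfolding Pr_def badp_def using q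
          by (auto simp: in_prime_factors_iff split: if_splits)
      qed
      have cB: "card Bad \<le> card Ps + card (prime_factors q)"
        using card_mono[OF _ sub] card_Un_le[of Ps "prime_factors q"] finPs by simp
      define s :: real where "s = 3 ^ card Ps"
      define t :: real where "t = 3 ^ card (prime_factors q)"
      have Xst: "X \<le> s * t" unfolding X_def s_def t_def
        using cB by (simp add: power_add[symmetric] power_increasing)
      have cPs: "real (card Ps) \<le> \<beta>"
      proof -
        have "Ps \<subseteq> {1..nat \<lfloor>\<beta>\<rfloor>}"
        proof
          fix x assume "x \<in> Ps"
          hence x: "prime x" "real x \<le> \<beta>" unfolding Ps_def by auto
          have "x \<ge> 1" using prime_ge_1_nat[OF x(1)] .
          moreover have "x \<le> nat \<lfloor>\<beta>\<rfloor>" using x(2) by (simp add: le_nat_floor)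
          ultimately show "x \<in> {1..nat \<lfloor>\<beta>\<rfloor>}" by simp
        qed
        hence "card Ps \<le> nat \<lfloor>\<beta>\<rfloor>" using card_mono[of "{1..nat \<lfloor>\<beta>\<rfloor>}" Ps] by simp
        thus ?thesis using bpos by linarith
      qed
      have s2: "s^2 \<le> 9 powr \<beta>"
      proof -
        have "s^2 = 9 ^ card Ps" unfolding s_def by (rule pow39)
        also have "\<dots> = 9 powr real (card Ps)" by (simp add: powr_realpow)
        also have "\<dots> \<le> 9 powr \<beta>" using cPs by (intro powr_mono) auto
        finally show ?thesis .
      qed
      have t2: "t^2 \<le> 9^9 * real q"
      proof -
        have "(9::nat) ^ card (prime_factors q) \<le> 9 ^ 9 * q" using q by (intro omega_bound) auto
        hence "real ((9::nat) ^ card (prime_factors q)) \<le> real (9 ^ 9 * q)" by (simp only: of_nat_le_iff)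
        thus ?thesis unfolding t_def pow39 by simp
      qed
      have KAb: "\<beta>^5 * (9/10) powr \<beta> \<le> KA" using KA bpos by auto
      have "\<beta> * \<beta> * X / real q \<le> CA / \<beta>"
        by (rule caseA_arith[OF b2 qA X0 Xst _ _ s2 t2 KAb CA_def]) (auto simp: s_def t_def)
      also have "\<dots> \<le> c / \<beta>" unfolding c_def using bpos by (simp add: divide_right_mono)
      also have "\<dots> \<le> c * (ln (2 * \<beta>) / (\<alpha> / \<beta>) + 1 / \<beta>)"
      proof -
        have "0 \<le> ln (2 * \<beta>) / (\<alpha> / \<beta>)" using lnterm bpos alpos
          by (smt (verit) divide_pos_pos)
        hence "c * 0 \<le> c * (ln (2 * \<beta>) / (\<alpha> / \<beta>))" using cpos by (intro mult_left_mono) auto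
        hence "0 \<le> c * (ln (2 * \<beta>) / (\<alpha> / \<beta>))" by simp
        moreover have "c / \<beta> = c * (1 / \<beta>)" by simp
        ultimately show ?thesis by (simp only: distrib_left)
      qed
      finally show ?thesis .
    qed
    show "Limsup at_top (\<lambda>T. ereal (PT T (Nset \<alpha> \<inter> Nset \<beta>) / (PT T (Nset \<alpha>) * PT T (Nset \<beta>))))
       \<le> ereal (1 + c * (ln (2 * \<beta>) / (\<alpha> / \<beta>) + 1 / \<beta>))"
    proof -
      have "ereal (1 + \<beta> * \<beta> * X / real q) \<le> ereal (1 + c * (ln (2 * \<beta>) / (\<alpha> / \<beta>) + 1 / \<beta>))"
        using bnd by (simp only: ereal_less_eq(3) add_le_cancel_left)
      with ib show ?thesis by (rule order_trans)
    qed
  qed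
qed

end
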